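(* Let $X$ be a real random variable with $\mathbb{E}X^2<\infty$, $\mu=\mathbb{E}X$, $\sigma^2=\operatorname{Var}(X)$, let $(X_{i,k})_{1\le i\le k}$ be a triangular array of i.i.d. random variables distributed as $X$, and $S_{k,k}=\sum_{i=1}^kX_{i,k}$. Then, as $n\to\infty$, \[ \sum_{k=1}^n\left[\left(\frac{S_{k,k}-k\mu}{k}\right)^2-\frac{\mathbb{E}\big[|X-\mu|^2\mathbf{1}_{\{|X-\mu|\le\sigma k\}}\big]}{k}\right]=O_{\mathbb{P}}(1) \quad\text{and}\quad \sum_{k=1}^n\left|\frac{S_{k,k}-k\mu}{k}\right|^3=O_{\mathbb{P}}(1). \]
   Context: For a sequence of random variables $(Z_n)$, $Z_n=O_{\mathbb{P}}(1)$ means the sequence is bounded in probability (tight): for every $\varepsilon>0$ there is $M$ with $\sup_n\mathbb{P}(|Z_n|>M)<\varepsilon$. *)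

theory Defs
  imports "HOL-Probability.Probability"
begin

definition bounded_in_prob :: "'a measure \<Rightarrow> (nat \<Rightarrow> 'a \<Rightarrow> real) \<Rightarrow> bool" where
  "bounded_in_prob M Z \<longleftrightarrow>
     (\<forall>e>0. \<exists>B. (SUP n. measure M {\<omega> \<in> space M. \<bar>Z n \<omega>\<bar> > B}) < e)"

end

theory Submission
  imports Defs
begin


lemma bip_measure_le1:
  assumes "prob_space M"
  shows "bdd_above (range (\<lambda>n. measure M {\<omega> \<in> space M. \<bar>Z n \<omega>\<bar> > B}))"
proof -
  interpret prob_space M by fact
  show ?thesis by (intro bdd_aboveI[of _ 1]) auto
qed

lemma bip_intro:
  assumes "prob_space M"
    and "\<And>e. e > 0 \<Longrightarrow> \<exists>B c. c < e \<and> (\<forall>n. measure M {\<omega> \<in> space M. \<bar>Z n \<omega>\<bar> > B} \<le> c)"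
  shows "bounded_in_prob M Z"
  unfolding bounded_in_prob_def
proof (intro allI impI)
  fix e :: real assume "e > 0"
  then obtain B c where "c < e" "\<forall>n. measure M {\<omega> \<in> space M. \<bar>Z n \<omega>\<bar> > B} \<le> c"
    using assms(2) by blast
  then have "(SUP n. measure M {\<omega> \<in> space M. \<bar>Z n \<omega>\<bar> > B}) \<le> c"
    by (intro cSUP_least) auto
  with \<open>c < e\<close> show "\<exists>B. (SUP n. measure M {\<omega> \<in> space M. \<bar>Z n \<omega>\<bar> > B}) < e"
    by (intro exI[of _ B]) simp
qed

lemma bip_elim:
  assumes "prob_space M" "bounded_in_prob M Z" "e > 0"
  obtains B where "\<And>n. measure M {\<omega> \<in> space M. \<bar>Z n \<omega>\<bar> > B} < e"
proof -
  obtain B where B: "(SUP n. measure M {\<omega> \<in> space M. \<bar>Z n \<omega>\<bar> > B}) < e"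
    using assms unfolding bounded_in_prob_def by blast
  have "measure M {\<omega> \<in> space M. \<bar>Z n \<omega>\<bar> > B} < e" for n
    using order.strict_trans1[OF cSUP_upper[OF UNIV_I bip_measure_le1[OF assms(1)]] B] by auto
  then show ?thesis using that by blast
qed

lemma bip_add:
  assumes P: "prob_space M" and Z1: "bounded_in_prob M Z1" and Z2: "bounded_in_prob M Z2"
    and m1: "\<And>n. Z1 n \<in> borel_measurable M" and m2: "\<And>n. Z2 n \<in> borel_measurable M"
    and eq: "\<And>n \<omega>. \<omega> \<in> space M \<Longrightarrow> Z n \<omega> = Z1 n \<omega> + Z2 n \<omega>"
  shows "bounded_in_prob M Z"
proof (rule bip_intro[OF P])
  interpret prob_space M by fact
  fix e :: real assume "e > 0"
  then have e2: "e/3 > 0" by simp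
  obtain B1 where B1: "\<And>n. measure M {\<omega> \<in> space M. \<bar>Z1 n \<omega>\<bar> > B1} < e/3"
    using bip_elim[OF P Z1 e2] by blast
  obtain B2 where B2: "\<And>n. measure M {\<omega> \<in> space M. \<bar>Z2 n \<omega>\<bar> > B2} < e/3"
    using bip_elim[OF P Z2 e2] by blast
  have "measure M {\<omega> \<in> space M. \<bar>Z n \<omega>\<bar> > B1 + B2} \<le> 2*e/3" for n
  proof -
    have "measure M {\<omega> \<in> space M. \<bar>Z n \<omega>\<bar> > B1 + B2}
        \<le> measure M ({\<omega> \<in> space M. \<bar>Z1 n \<omega>\<bar> > B1} \<union> {\<omega> \<in> space M. \<bar>Z2 n \<omega>\<bar> > B2})"
      using m1[of n] m2[of n] eq by (intro finite_measure_mono) auto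
    also have "\<dots> \<le> measure M {\<omega> \<in> space M. \<bar>Z1 n \<omega>\<bar> > B1} + measure M {\<omega> \<in> space M. \<bar>Z2 n \<omega>\<bar> > B2}"
      using m1[of n] m2[of n] by (intro measure_Un_le) auto
    also have "\<dots> \<le> 2*e/3" using B1[of n] B2[of n] by simp
    finally show ?thesis .
  qed
  then show "\<exists>B c. c < e \<and> (\<forall>n. measure M {\<omega> \<in> space M. \<bar>Z n \<omega>\<bar> > B} \<le> c)"
    using \<open>e > 0\<close> by (intro exI[of _ "B1+B2"] exI[of _ "2*e/3"]) auto
qed

lemma bip_L1:
  assumes P: "prob_space M" and int: "\<And>n. integrable M (Z n)"
    and bnd: "\<And>n. (\<integral>\<omega>. \<bar>Z n \<omega>\<bar> \<partial>M) \<le> C"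
  shows "bounded_in_prob M Z"
proof (rule bip_intro[OF P])
  interpret prob_space M by fact
  fix e :: real assume "e > 0"
  define B where "B = 2 * (\<bar>C\<bar> + 1) / e"
  have Bpos: "B > 0" using \<open>e>0\<close> by (simp add: B_def)
  have "measure M {\<omega> \<in> space M. \<bar>Z n \<omega>\<bar> > B} \<le> (\<bar>C\<bar> + 1) / B" for n
  proof -
    have "measure M {\<omega> \<in> space M. \<bar>Z n \<omega>\<bar> > B} \<le> measure M {\<omega> \<in> space M. \<bar>Z n \<omega>\<bar> \<ge> B}"
      using int[of n] by (intro finite_measure_mono) auto
    also have "\<dots> \<le> (\<integral>\<omega>. \<bar>Z n \<omega>\<bar> \<partial>M) / B"
      using int[of n] Bpos by (intro integral_Markov_inequality_measure[where A="space M"]) auto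
    also have "\<dots> \<le> (\<bar>C\<bar> + 1) / B"
      using bnd[of n] Bpos by (intro divide_right_mono) auto
    finally show ?thesis .
  qed
  moreover have "(\<bar>C\<bar> + 1) / B < e"
    using \<open>e>0\<close> by (simp add: B_def field_simps) (simp add: add_pos_nonneg)
  ultimately show "\<exists>B c. c < e \<and> (\<forall>n. measure M {\<omega> \<in> space M. \<bar>Z n \<omega>\<bar> > B} \<le> c)"
    by blast
qed

lemma rv_tail_small:
  fixes W :: "'a \<Rightarrow> real"
  assumes P: "prob_space M" and W: "W \<in> borel_measurable M" and "e > 0"
  shows "\<exists>B. measure M {\<omega> \<in> space M. W \<omega> > B} < e"
proof -
  interpret prob_space M by fact
  have "(\<lambda>n. measure M {\<omega> \<in> space M. W \<omega> > real n}) \<longlonglongrightarrow> measure M (\<Inter>n. {\<omega> \<in> space M. W \<omega> > real n})"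
    using W by (intro finite_Lim_measure_decseq) (auto simp: decseq_def)
  moreover have "(\<Inter>n. {\<omega> \<in> space M. W \<omega> > real n}) = {}"
  proof -
    have "\<not> (\<forall>n. W \<omega> > real n)" for \<omega>
      using reals_Archimedean2[of "W \<omega>"] by (auto simp: not_less dest: less_imp_le)
    then show ?thesis by auto
  qed
  ultimately have "(\<lambda>n. measure M {\<omega> \<in> space M. W \<omega> > real n}) \<longlonglongrightarrow> 0" by simp
  then obtain N where "\<forall>n\<ge>N. measure M {\<omega> \<in> space M. W \<omega> > real n} < e"
    using \<open>e>0\<close> by (auto simp: lim_sequentially dist_real_def)
  then show ?thesis by blast
qed

lemma sum_le_W:
  fixes D :: "nat \<Rightarrow> real"
  assumes "\<And>k. k \<ge> K \<Longrightarrow> D k = 0"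
  shows "\<bar>\<Sum>k=1..n. D k\<bar> \<le> (\<Sum>k<K. \<bar>D k\<bar>)"
proof -
  have "\<bar>\<Sum>k=1..n. D k\<bar> \<le> (\<Sum>k=1..n. \<bar>D k\<bar>)" by (rule sum_abs)
  also have "\<dots> = (\<Sum>k\<in>{1..n}. if k \<in> {..<K} then \<bar>D k\<bar> else 0)"
    using assms by (intro sum.cong) (auto simp: not_less)
  also have "\<dots> = (\<Sum>k\<in>{1..n} \<inter> {..<K}. \<bar>D k\<bar>)"
    by (simp add: sum.inter_restrict)
  also have "\<dots> \<le> (\<Sum>k<K. \<bar>D k\<bar>)"
    by (intro sum_mono2) auto
  finally show ?thesis .
qed

lemma bip_rare:
  fixes D :: "nat \<Rightarrow> 'a \<Rightarrow> real"
  assumes P: "prob_space M" and m: "\<And>k. D k \<in> borel_measurable M"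
    and s: "summable (\<lambda>k. measure M {\<omega> \<in> space M. D k \<omega> \<noteq> 0})"
  shows "bounded_in_prob M (\<lambda>n \<omega>. \<Sum>k=1..n. D k \<omega>)"
proof (rule bip_intro[OF P])
  interpret prob_space M by fact
  fix e :: real assume "e > 0"
  define p where "p k = measure M {\<omega> \<in> space M. D k \<omega> \<noteq> 0}" for k
  obtain K where K: "norm (\<Sum>i. p (i + K)) < e/3"
    using suminf_exist_split[of "e/3" p] s \<open>e>0\<close> unfolding p_def by auto
  define A where "A i = {\<omega> \<in> space M. D (i + K) \<omega> \<noteq> 0}" for i
  have As: "range A \<subseteq> sets M" using m unfolding A_def by auto
  have sA: "summable (\<lambda>i. measure M (A i))"
    using summable_ignore_initial_segment[OF s, of K] unfolding A_def by simp
  have "measure M (\<Union>i. A i) \<le> (\<Sum>i. measure M (A i))"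
    by (rule finite_measure_subadditive_countably[OF As sA])
  also have "\<dots> < e/3" using K unfolding A_def p_def by simp
  finally have UA: "measure M (\<Union>i. A i) < e/3" .
  define W where "W \<omega> = (\<Sum>k<K. \<bar>D k \<omega>\<bar>)" for \<omega>
  have Wm: "W \<in> borel_measurable M" unfolding W_def using m by measurable
  obtain B where B: "measure M {\<omega> \<in> space M. W \<omega> > B} < e/3"
    using rv_tail_small[OF P Wm, of "e/3"] \<open>e>0\<close> by auto
  have "measure M {\<omega> \<in> space M. \<bar>\<Sum>k=1..n. D k \<omega>\<bar> > B} \<le> 2*e/3" for n
  proof -
    have sub: "{\<omega> \<in> space M. \<bar>\<Sum>k=1..n. D k \<omega>\<bar> > B} \<subseteq> {\<omega> \<in> space M. W \<omega> > B} \<union> (\<Union>i. A i)"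
    proof safe
      fix \<omega> assume \<omega>: "\<omega> \<in> space M" "\<bar>\<Sum>k=1..n. D k \<omega>\<bar> > B" "\<omega> \<notin> (\<Union>i. A i)"
      have "D k \<omega> = 0" if "k \<ge> K" for k
        using \<omega>(1,3) that unfolding A_def
        by (auto dest!: spec[of _ "k - K"])
      then have "\<bar>\<Sum>k=1..n. D k \<omega>\<bar> \<le> W \<omega>" unfolding W_def by (rule sum_le_W)
      then show "B < W \<omega>" using \<omega>(2) by simp
    qed
    have "measure M {\<omega> \<in> space M. \<bar>\<Sum>k=1..n. D k \<omega>\<bar> > B} \<le> measure M ({\<omega> \<in> space M. W \<omega> > B} \<union> (\<Union>i. A i))"
      using sub As Wm by (intro finite_measure_mono) auto
    also have "\<dots> \<le> measure M {\<omega> \<in> space M. W \<omega> > B} + measure M (\<Union>i. A i)"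
      using As Wm by (intro measure_Un_le) auto
    also have "\<dots> \<le> 2*e/3" using B UA by simp
    finally show ?thesis .
  qed
  then show "\<exists>B c. c < e \<and> (\<forall>n. measure M {\<omega> \<in> space M. \<bar>\<Sum>k=1..n. D k \<omega>\<bar> > B} \<le> c)"
    using \<open>e > 0\<close> by (intro exI[of _ B] exI[of _ "2*e/3"]) auto
qed


definition bnd_on :: "'a set \<Rightarrow> ('a \<Rightarrow> real) \<Rightarrow> bool" where
  "bnd_on S f \<longleftrightarrow> (\<exists>c. \<forall>x\<in>S. \<bar>f x\<bar> \<le> c)"

lemma bnd_onI: "(\<And>x. x \<in> S \<Longrightarrow> \<bar>f x\<bar> \<le> c) \<Longrightarrow> bnd_on S f"
  unfolding bnd_on_def by blast

lemma bnd_on_const[simp]: "bnd_on S (\<lambda>x. c)"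
  by (rule bnd_onI[of _ _ "\<bar>c\<bar>"]) auto

lemma bnd_on_add: "bnd_on S f \<Longrightarrow> bnd_on S g \<Longrightarrow> bnd_on S (\<lambda>x. f x + g x)"
proof -
  assume "bnd_on S f" "bnd_on S g"
  then obtain a b where a: "\<forall>x\<in>S. \<bar>f x\<bar> \<le> a" and b: "\<forall>x\<in>S. \<bar>g x\<bar> \<le> b" unfolding bnd_on_def by blast
  show ?thesis
  proof (rule bnd_onI[of _ _ "a+b"])
    fix x assume "x \<in> S"
    then show "\<bar>f x + g x\<bar> \<le> a + b" using a b by (smt (verit))
  qed
qed

lemma bnd_on_uminus: "bnd_on S f \<Longrightarrow> bnd_on S (\<lambda>x. - f x)"
  unfolding bnd_on_def by auto

lemma bnd_on_diff: "bnd_on S f \<Longrightarrow> bnd_on S g \<Longrightarrow> bnd_on S (\<lambda>x. f x - g x)"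
  using bnd_on_add[of S f "\<lambda>x. - g x"] bnd_on_uminus[of S g] by simp

lemma bnd_on_mult: "bnd_on S f \<Longrightarrow> bnd_on S g \<Longrightarrow> bnd_on S (\<lambda>x. f x * g x)"
proof -
  assume "bnd_on S f" "bnd_on S g"
  then obtain a b where a: "\<forall>x\<in>S. \<bar>f x\<bar> \<le> a" and b: "\<forall>x\<in>S. \<bar>g x\<bar> \<le> b" unfolding bnd_on_def by blast
  show ?thesis
  proof (rule bnd_onI[of _ _ "a*b"])
    fix x assume "x \<in> S"
    then show "\<bar>f x * g x\<bar> \<le> a * b" using a b by (auto simp: abs_mult intro!: mult_mono)
  qed
qed

lemma bnd_on_abs: "bnd_on S f \<Longrightarrow> bnd_on S (\<lambda>x. \<bar>f x\<bar>)"
  unfolding bnd_on_def by auto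

lemma bnd_on_power: "bnd_on S f \<Longrightarrow> bnd_on S (\<lambda>x. f x ^ n)"
  by (induction n) (auto intro: bnd_on_mult)

lemma bnd_on_divide: "bnd_on S f \<Longrightarrow> bnd_on S (\<lambda>x. f x / c)"
  using bnd_on_mult[of S f "\<lambda>x. 1/c"] by simp

lemma bnd_on_sum: "(\<And>i. i \<in> I \<Longrightarrow> bnd_on S (f i)) \<Longrightarrow> bnd_on S (\<lambda>x. \<Sum>i\<in>I. f i x)"
proof (induction I rule: infinite_finite_induct)
  case (insert i I) then show ?case by (auto intro: bnd_on_add)
qed auto

lemma (in prob_space) bnd_integrable:
  "f \<in> borel_measurable M \<Longrightarrow> bnd_on (space M) f \<Longrightarrow> integrable M f"
proof -
  assume f: "f \<in> borel_measurable M" and "bnd_on (space M) f"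
  then obtain c where "\<forall>x\<in>space M. \<bar>f x\<bar> \<le> c" unfolding bnd_on_def by blast
  then show ?thesis by (intro integrable_const_bound[where B=c] f) auto
qed

lemma (in prob_space) indep_expect_mult:
  fixes X Y :: "'a \<Rightarrow> real" and f g :: "real \<Rightarrow> real"
  assumes "indep_var borel X borel Y" "f \<in> borel_measurable borel" "g \<in> borel_measurable borel"
    "integrable M (\<lambda>\<omega>. f (X \<omega>))" "integrable M (\<lambda>\<omega>. g (Y \<omega>))"
  shows "(\<integral>\<omega>. f (X \<omega>) * g (Y \<omega>) \<partial>M) = (\<integral>\<omega>. f (X \<omega>) \<partial>M) * (\<integral>\<omega>. g (Y \<omega>) \<partial>M)"
proof -
  have "indep_var borel (f \<circ> X) borel (g \<circ> Y)"
    by (rule indep_var_compose[OF assms(1-3)])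
  from indep_var_lebesgue_integral[OF this] assms(4,5) show ?thesis by (simp add: comp_def)
qed

lemma (in prob_space) abs_expect_sq:
  fixes f :: "'a \<Rightarrow> real"
  assumes "integrable M (\<lambda>\<omega>. (f \<omega>)\<^sup>2)" "integrable M f" "f \<in> borel_measurable M"
  shows "(\<integral>\<omega>. \<bar>f \<omega>\<bar> \<partial>M)\<^sup>2 \<le> (\<integral>\<omega>. (f \<omega>)\<^sup>2 \<partial>M)"
proof -
  define a where "a = (\<integral>\<omega>. \<bar>f \<omega>\<bar> \<partial>M)"
  have "0 \<le> (\<integral>\<omega>. (\<bar>f \<omega>\<bar> - a)\<^sup>2 \<partial>M)" by (rule integral_nonneg_AE) auto
  also have "(\<lambda>\<omega>. (\<bar>f \<omega>\<bar> - a)\<^sup>2) = (\<lambda>\<omega>. (f \<omega>)\<^sup>2 - 2 * a * \<bar>f \<omega>\<bar> + a\<^sup>2)"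
    by (auto simp: power2_eq_square algebra_simps)
  also have "(\<integral>\<omega>. (f \<omega>)\<^sup>2 - 2 * a * \<bar>f \<omega>\<bar> + a\<^sup>2 \<partial>M) = (\<integral>\<omega>. (f \<omega>)\<^sup>2 \<partial>M) - 2 * a * a + a\<^sup>2"
    using assms by (simp add: a_def prob_space)
  finally show ?thesis by (simp add: a_def power2_eq_square)
qed

lemma cube_ineq_pos: fixes a b :: real assumes "a \<ge> 0"
  shows "\<bar>a+b\<bar>^3 \<le> \<bar>a\<bar>^3 + 3*(a*\<bar>a\<bar>)*b + 3*\<bar>a\<bar>*b^2 + 3*\<bar>b\<bar>^3"
proof (cases "a + b \<ge> 0")
  case True
  have "\<bar>a+b\<bar>^3 = a^3 + 3*a^2*b + 3*a*b^2 + b^3" using True by (simp add: power3_eq_cube power2_eq_square algebra_simps)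
  moreover have "b^3 \<le> 3*\<bar>b\<bar>^3"
  proof -
    have "b^3 \<le> \<bar>b\<bar>^3" using abs_ge_self[of "b^3"] by (simp add: power_abs)
    moreover have "0 \<le> \<bar>b\<bar>^3" by simp
    ultimately show ?thesis by linarith
  qed
  ultimately show ?thesis using \<open>a \<ge> 0\<close> by (simp add: power2_eq_square power3_eq_cube)
next
  case False
  have q: "0 \<le> a^2 + 3*a*b + 3*b^2"
  proof -
    have "a^2 + 3*a*b + 3*b^2 = (a + 3*b/2)^2 + 3*b^2/4" by (simp add: power2_eq_square algebra_simps)
    also have "\<dots> \<ge> 0" by simp
    finally show ?thesis by simp
  qed
  have "0 \<le> a * (a^2 + 3*a*b + 3*b^2)" using q assms by simp
  then have h1: "0 \<le> a^3 + 3*a^2*b + 3*a*b^2" by (simp add: power2_eq_square power3_eq_cube algebra_simps)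
  have "\<bar>a+b\<bar> \<le> \<bar>b\<bar>" using False assms by simp
  then have c: "\<bar>a+b\<bar>^3 \<le> \<bar>b\<bar>^3" by (intro power_mono) auto
  have e: "\<bar>a\<bar>^3 + 3*(a*\<bar>a\<bar>)*b + 3*\<bar>a\<bar>*b^2 = a^3+3*a^2*b+3*a*b^2" using assms by (simp add: power2_eq_square)
  have "0 \<le> \<bar>b\<bar>^3" by simp
  then show ?thesis using h1 c e by linarith
qed

lemma cube_ineq: fixes a b :: real
  shows "\<bar>a+b\<bar>^3 \<le> \<bar>a\<bar>^3 + 3*(a*\<bar>a\<bar>)*b + 3*\<bar>a\<bar>*b^2 + 3*\<bar>b\<bar>^3"
proof (cases "a \<ge> 0")
  case True then show ?thesis by (rule cube_ineq_pos)
next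
  case False
  have "\<bar>(-a)+(-b)\<bar>^3 \<le> \<bar>-a\<bar>^3 + 3*((-a)*\<bar>-a\<bar>)*(-b) + 3*\<bar>-a\<bar>*(-b)^2 + 3*\<bar>-b\<bar>^3"
    using False by (intro cube_ineq_pos) auto
  moreover have "\<bar>-a-b\<bar> = \<bar>a+b\<bar>" by (subst abs_minus_cancel[symmetric]) simp
  ultimately show ?thesis by simp
qed

context prob_space begin

lemma indep_rv: "indep_vars (\<lambda>_. borel) W J \<Longrightarrow> j \<in> J \<Longrightarrow> random_variable borel (W j)"
  by (auto simp: indep_vars_def)

lemma sum_mean0:
  fixes W :: "'i \<Rightarrow> 'a \<Rightarrow> real"
  assumes "indep_vars (\<lambda>_. borel) W J"
    "\<And>j. j\<in>J \<Longrightarrow> bnd_on (space M) (W j)" "\<And>j. j\<in>J \<Longrightarrow> expectation (W j) = 0"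
  shows "expectation (\<lambda>\<omega>. \<Sum>j\<in>J. W j \<omega>) = 0"
proof -
  have "expectation (\<lambda>\<omega>. \<Sum>j\<in>J. W j \<omega>) = (\<Sum>j\<in>J. expectation (W j))"
    by (rule Bochner_Integration.integral_sum, rule bnd_integrable, rule indep_rv[OF assms(1)]) (use assms(2) in auto)
  then show ?thesis using assms by simp
qed

lemma sum_bnd:
  fixes W :: "'i \<Rightarrow> 'a \<Rightarrow> real"
  shows "(\<And>j. j\<in>J \<Longrightarrow> bnd_on (space M) (W j)) \<Longrightarrow> bnd_on (space M) (\<lambda>\<omega>. \<Sum>j\<in>J. W j \<omega>)"
  by (rule bnd_on_sum)

lemma sum_moment2:
  fixes W :: "'i \<Rightarrow> 'a \<Rightarrow> real"
  assumes "finite J" "indep_vars (\<lambda>_. borel) W J"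
    "\<And>j. j\<in>J \<Longrightarrow> bnd_on (space M) (W j)" "\<And>j. j\<in>J \<Longrightarrow> expectation (W j) = 0"
  shows "expectation (\<lambda>\<omega>. (\<Sum>j\<in>J. W j \<omega>)\<^sup>2) = (\<Sum>j\<in>J. expectation (\<lambda>\<omega>. (W j \<omega>)\<^sup>2))"
  using assms(1,2,3,4)
proof (induction J rule: finite_induct)
  case empty then show ?case by simp
next
  case (insert j J)
  have indJ: "indep_vars (\<lambda>_. borel) W J" using insert.prems(1) by (rule indep_vars_subset) auto
  define T where "T \<omega> = (\<Sum>i\<in>J. W i \<omega>)" for \<omega>
  have rv: "random_variable borel (W i)" if "i \<in> insert j J" for i using insert.prems(1) that by (rule indep_rv)
  have Tm[measurable]: "T \<in> borel_measurable M" unfolding T_def using rv by auto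
  have wm[measurable]: "W j \<in> borel_measurable M" using rv by auto
  have Tb: "bnd_on (space M) T" unfolding T_def using insert.prems by (intro bnd_on_sum) auto
  have wb: "bnd_on (space M) (W j)" using insert.prems by auto
  have ET: "expectation T = 0" unfolding T_def using indJ insert.prems by (intro sum_mean0) auto
  have Ew: "expectation (W j) = 0" using insert.prems by auto
  have ind: "indep_var borel (W j) borel T"
    unfolding T_def using insert.hyps insert.prems(1) by (intro indep_vars_sum) auto
  have i1: "integrable M (\<lambda>\<omega>. (W j \<omega>)\<^sup>2)" by (intro bnd_integrable bnd_on_power wb) auto
  have i2: "integrable M (\<lambda>\<omega>. 2 * (W j \<omega> * T \<omega>))" by (intro bnd_integrable bnd_on_mult Tb wb) auto
  have i3: "integrable M (\<lambda>\<omega>. (T \<omega>)\<^sup>2)" by (intro bnd_integrable bnd_on_power Tb) auto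
  have "expectation (\<lambda>\<omega>. (\<Sum>i\<in>insert j J. W i \<omega>)\<^sup>2)
      = expectation (\<lambda>\<omega>. (W j \<omega>)\<^sup>2 + 2 * (W j \<omega> * T \<omega>) + (T \<omega>)\<^sup>2)"
    using insert.hyps by (simp add: T_def power2_eq_square algebra_simps)
  also have "\<dots> = expectation (\<lambda>\<omega>. (W j \<omega>)\<^sup>2) + 2 * expectation (\<lambda>\<omega>. W j \<omega> * T \<omega>) + expectation (\<lambda>\<omega>. (T \<omega>)\<^sup>2)"
    using i1 i2 i3 by simp
  also have "expectation (\<lambda>\<omega>. W j \<omega> * T \<omega>) = expectation (W j) * expectation T"
    using indep_expect_mult[OF ind, of "\<lambda>x. x" "\<lambda>x. x"] bnd_integrable[OF wm wb] bnd_integrable[OF Tm Tb] by simp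
  also have "expectation (\<lambda>\<omega>. (T \<omega>)\<^sup>2) = (\<Sum>j\<in>J. expectation (\<lambda>\<omega>. (W j \<omega>)\<^sup>2))"
    unfolding T_def using insert.IH indJ insert.prems by auto
  finally show ?case using insert.hyps ET by simp
qed

lemma sum_moment4:
  fixes W :: "'i \<Rightarrow> 'a \<Rightarrow> real" and v r :: real
  assumes "finite J" "indep_vars (\<lambda>_. borel) W J"
    "\<And>j. j\<in>J \<Longrightarrow> bnd_on (space M) (W j)" "\<And>j. j\<in>J \<Longrightarrow> expectation (W j) = 0"
    "\<And>j. j\<in>J \<Longrightarrow> expectation (\<lambda>\<omega>. (W j \<omega>)\<^sup>2) \<le> v"
    "\<And>j. j\<in>J \<Longrightarrow> expectation (\<lambda>\<omega>. (W j \<omega>)^4) \<le> r" "v \<ge> 0"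
  shows "expectation (\<lambda>\<omega>. (\<Sum>j\<in>J. W j \<omega>)^4) \<le> card J * r + 3 * (card J)\<^sup>2 * v\<^sup>2"
  using assms(1-6)
proof (induction J rule: finite_induct)
  case empty then show ?case by simp
next
  case (insert j J)
  have indJ: "indep_vars (\<lambda>_. borel) W J" using insert.prems(1) by (rule indep_vars_subset) auto
  define T where "T \<omega> = (\<Sum>i\<in>J. W i \<omega>)" for \<omega>
  have rv: "random_variable borel (W i)" if "i \<in> insert j J" for i using insert.prems(1) that by (rule indep_rv)
  have Tm[measurable]: "T \<in> borel_measurable M" unfolding T_def using rv by auto
  have wm[measurable]: "W j \<in> borel_measurable M" using rv by auto
  have Tb: "bnd_on (space M) T" unfolding T_def using insert.prems by (intro bnd_on_sum) auto
  have wb: "bnd_on (space M) (W j)" using insert.prems by auto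
  have ET: "expectation T = 0" unfolding T_def using indJ insert.prems by (intro sum_mean0) auto
  have Ew: "expectation (W j) = 0" using insert.prems by auto
  have ind: "indep_var borel (W j) borel T"
    unfolding T_def using insert.hyps insert.prems(1) by (intro indep_vars_sum) auto
  have ET2: "expectation (\<lambda>\<omega>. (T \<omega>)\<^sup>2) \<le> card J * v"
  proof -
    have "expectation (\<lambda>\<omega>. (T \<omega>)\<^sup>2) = (\<Sum>i\<in>J. expectation (\<lambda>\<omega>. (W i \<omega>)\<^sup>2))"
      unfolding T_def using insert indJ by (intro sum_moment2) auto
    also have "\<dots> \<le> (\<Sum>i\<in>J. v)" using insert.prems by (intro sum_mono) auto
    finally show ?thesis by simp
  qed
  have IH: "expectation (\<lambda>\<omega>. (T \<omega>)^4) \<le> card J * r + 3 * (card J)\<^sup>2 * v\<^sup>2"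
    unfolding T_def using insert.IH indJ insert.prems by auto
  have int: "integrable M (\<lambda>\<omega>. (W j \<omega>)^a * (T \<omega>)^b)" for a b
    by (intro bnd_integrable bnd_on_mult bnd_on_power Tb wb) auto
  have intw: "integrable M (\<lambda>\<omega>. (W j \<omega>)^a)" for a
    by (intro bnd_integrable bnd_on_power wb) auto
  have intT: "integrable M (\<lambda>\<omega>. (T \<omega>)^a)" for a
    by (intro bnd_integrable bnd_on_power Tb) auto
  have mult: "expectation (\<lambda>\<omega>. (W j \<omega>)^a * (T \<omega>)^b) = expectation (\<lambda>\<omega>. (W j \<omega>)^a) * expectation (\<lambda>\<omega>. (T \<omega>)^b)" for a b
    by (rule indep_expect_mult[OF ind]) (auto intro: intw intT)
  have "expectation (\<lambda>\<omega>. (\<Sum>i\<in>insert j J. W i \<omega>)^4)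
      = expectation (\<lambda>\<omega>. (W j \<omega>)^4 * (T \<omega>)^0 + 4 * ((W j \<omega>)^3 * (T \<omega>)^1) + 6 * ((W j \<omega>)^2 * (T \<omega>)^2)
            + 4 * ((W j \<omega>)^1 * (T \<omega>)^3) + (W j \<omega>)^0 * (T \<omega>)^4)"
    using insert.hyps by (intro Bochner_Integration.integral_cong) (simp_all add: T_def power4_eq_xxxx power3_eq_cube power2_eq_square algebra_simps)
  also have "\<dots> = expectation (\<lambda>\<omega>. (W j \<omega>)^4 * (T \<omega>)^0) + 4 * expectation (\<lambda>\<omega>. (W j \<omega>)^3 * (T \<omega>)^1)
      + 6 * expectation (\<lambda>\<omega>. (W j \<omega>)^2 * (T \<omega>)^2) + 4 * expectation (\<lambda>\<omega>. (W j \<omega>)^1 * (T \<omega>)^3)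
      + expectation (\<lambda>\<omega>. (W j \<omega>)^0 * (T \<omega>)^4)"
    using int[of 4 0] int[of 3 1] int[of 2 2] int[of 1 3] int[of 0 4] by simp
  also have "\<dots> = expectation (\<lambda>\<omega>. (W j \<omega>)^4) + 6 * (expectation (\<lambda>\<omega>. (W j \<omega>)^2) * expectation (\<lambda>\<omega>. (T \<omega>)^2))
      + expectation (\<lambda>\<omega>. (T \<omega>)^4)"
    unfolding mult using ET Ew by (simp add: prob_space)
  also have "\<dots> \<le> r + 6 * (v * (card J * v)) + (card J * r + 3 * (card J)\<^sup>2 * v\<^sup>2)"
    using insert.prems ET2 IH \<open>v \<ge> 0\<close>
    by (intro add_mono mult_left_mono mult_mono) auto
  also have "\<dots> \<le> card (insert j J) * r + 3 * (card (insert j J))\<^sup>2 * v\<^sup>2"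
    using insert.hyps \<open>v \<ge> 0\<close> by (simp add: power2_eq_square algebra_simps)
  finally show ?case .
qed

lemma sum_moment3:
  fixes W :: "'i \<Rightarrow> 'a \<Rightarrow> real" and v r :: real
  assumes "finite J" "indep_vars (\<lambda>_. borel) W J"
    "\<And>j. j\<in>J \<Longrightarrow> bnd_on (space M) (W j)" "\<And>j. j\<in>J \<Longrightarrow> expectation (W j) = 0"
    "\<And>j. j\<in>J \<Longrightarrow> expectation (\<lambda>\<omega>. (W j \<omega>)\<^sup>2) \<le> v"
    "\<And>j. j\<in>J \<Longrightarrow> expectation (\<lambda>\<omega>. \<bar>W j \<omega>\<bar>^3) \<le> r" "v \<ge> 0"
  shows "expectation (\<lambda>\<omega>. \<bar>\<Sum>j\<in>J. W j \<omega>\<bar>^3) \<le> 3 * card J * sqrt (card J * v) * v + 3 * card J * r"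
  using assms(1-6)
proof (induction J rule: finite_induct)
  case empty then show ?case by simp
next
  case (insert j J)
  have indJ: "indep_vars (\<lambda>_. borel) W J" using insert.prems(1) by (rule indep_vars_subset) auto
  define T where "T \<omega> = (\<Sum>i\<in>J. W i \<omega>)" for \<omega>
  have rv: "random_variable borel (W i)" if "i \<in> insert j J" for i using insert.prems(1) that by (rule indep_rv)
  have Tm[measurable]: "T \<in> borel_measurable M" unfolding T_def using rv by auto
  have wm[measurable]: "W j \<in> borel_measurable M" using rv by auto
  have Tb: "bnd_on (space M) T" unfolding T_def using insert.prems by (intro bnd_on_sum) auto
  have wb: "bnd_on (space M) (W j)" using insert.prems by auto
  have Ew: "expectation (W j) = 0" using insert.prems by auto
  have ind: "indep_var borel (W j) borel T"
    unfolding T_def using insert.hyps insert.prems(1) by (intro indep_vars_sum) auto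
  have ET2: "expectation (\<lambda>\<omega>. (T \<omega>)\<^sup>2) \<le> card J * v"
  proof -
    have "expectation (\<lambda>\<omega>. (T \<omega>)\<^sup>2) = (\<Sum>i\<in>J. expectation (\<lambda>\<omega>. (W i \<omega>)\<^sup>2))"
      unfolding T_def using insert indJ by (intro sum_moment2) auto
    also have "\<dots> \<le> (\<Sum>i\<in>J. v)" using insert.prems by (intro sum_mono) auto
    finally show ?thesis by simp
  qed
  have IH: "expectation (\<lambda>\<omega>. \<bar>T \<omega>\<bar>^3) \<le> 3 * card J * sqrt (card J * v) * v + 3 * card J * r"
    unfolding T_def using insert.IH indJ insert.prems by auto
  have iT1: "integrable M (\<lambda>\<omega>. \<bar>T \<omega>\<bar>)" by (intro bnd_integrable bnd_on_abs Tb) auto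
  have iT2: "integrable M (\<lambda>\<omega>. (T \<omega>)\<^sup>2)" by (intro bnd_integrable bnd_on_power Tb) auto
  have iT: "integrable M T" by (intro bnd_integrable Tb) auto
  have ET1: "expectation (\<lambda>\<omega>. \<bar>T \<omega>\<bar>) \<le> sqrt (card J * v)"
    using abs_expect_sq[OF iT2 iT Tm] ET2 by (intro real_le_rsqrt) linarith
  have iw: "integrable M (W j)" by (intro bnd_integrable wb) auto
  have iw2: "integrable M (\<lambda>\<omega>. (W j \<omega>)\<^sup>2)" by (intro bnd_integrable bnd_on_power wb) auto
  have iw3: "integrable M (\<lambda>\<omega>. \<bar>W j \<omega>\<bar>^3)" by (intro bnd_integrable bnd_on_power bnd_on_abs wb) auto
  have iT3: "integrable M (\<lambda>\<omega>. \<bar>T \<omega>\<bar>^3)" by (intro bnd_integrable bnd_on_power bnd_on_abs Tb) auto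
  have iTT: "integrable M (\<lambda>\<omega>. T \<omega> * \<bar>T \<omega>\<bar>)" by (intro bnd_integrable bnd_on_mult bnd_on_abs Tb) auto
  have i1: "integrable M (\<lambda>\<omega>. W j \<omega> * (T \<omega> * \<bar>T \<omega>\<bar>))" by (intro bnd_integrable bnd_on_mult bnd_on_abs Tb wb) auto
  have i2: "integrable M (\<lambda>\<omega>. (W j \<omega>)\<^sup>2 * \<bar>T \<omega>\<bar>)" by (intro bnd_integrable bnd_on_mult bnd_on_power bnd_on_abs Tb wb) auto
  have m1: "expectation (\<lambda>\<omega>. W j \<omega> * (T \<omega> * \<bar>T \<omega>\<bar>)) = expectation (W j) * expectation (\<lambda>\<omega>. T \<omega> * \<bar>T \<omega>\<bar>)"
    using indep_expect_mult[OF ind, of "\<lambda>x. x" "\<lambda>x. x * \<bar>x\<bar>"] iw iTT by simp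
  have m2: "expectation (\<lambda>\<omega>. (W j \<omega>)\<^sup>2 * \<bar>T \<omega>\<bar>) = expectation (\<lambda>\<omega>. (W j \<omega>)\<^sup>2) * expectation (\<lambda>\<omega>. \<bar>T \<omega>\<bar>)"
    using indep_expect_mult[OF ind, of "\<lambda>x. x\<^sup>2" "\<lambda>x. \<bar>x\<bar>"] iw2 iT1 by simp
  have "expectation (\<lambda>\<omega>. \<bar>\<Sum>i\<in>insert j J. W i \<omega>\<bar>^3)
      \<le> expectation (\<lambda>\<omega>. \<bar>T \<omega>\<bar>^3 + 3 * (W j \<omega> * (T \<omega> * \<bar>T \<omega>\<bar>)) + 3 * ((W j \<omega>)\<^sup>2 * \<bar>T \<omega>\<bar>) + 3 * \<bar>W j \<omega>\<bar>^3)"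
  proof (rule integral_mono)
    show "integrable M (\<lambda>\<omega>. \<bar>\<Sum>i\<in>insert j J. W i \<omega>\<bar>^3)"
    proof (rule bnd_integrable)
      have sm[measurable]: "(\<lambda>\<omega>. \<Sum>i\<in>insert j J. W i \<omega>) \<in> borel_measurable M" using rv by auto
      show "(\<lambda>\<omega>. \<bar>\<Sum>i\<in>insert j J. W i \<omega>\<bar>^3) \<in> borel_measurable M" by measurable
      show "bnd_on (space M) (\<lambda>\<omega>. \<bar>\<Sum>i\<in>insert j J. W i \<omega>\<bar>^3)"
        using insert.prems by (intro bnd_on_power bnd_on_abs bnd_on_sum) auto
    qed
    show "integrable M (\<lambda>\<omega>. \<bar>T \<omega>\<bar>^3 + 3 * (W j \<omega> * (T \<omega> * \<bar>T \<omega>\<bar>)) + 3 * ((W j \<omega>)\<^sup>2 * \<bar>T \<omega>\<bar>) + 3 * \<bar>W j \<omega>\<bar>^3)"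
      using iT3 i1 i2 iw3 by auto
    fix \<omega> assume "\<omega> \<in> space M"
    have "\<bar>\<Sum>i\<in>insert j J. W i \<omega>\<bar> = \<bar>T \<omega> + W j \<omega>\<bar>" using insert.hyps by (simp add: T_def add.commute)
    moreover have "\<bar>T \<omega> + W j \<omega>\<bar>^3 \<le> \<bar>T \<omega>\<bar>^3 + 3*(T \<omega>*\<bar>T \<omega>\<bar>)*W j \<omega> + 3*\<bar>T \<omega>\<bar>*(W j \<omega>)^2 + 3*\<bar>W j \<omega>\<bar>^3"
      by (rule cube_ineq)
    ultimately show "\<bar>\<Sum>i\<in>insert j J. W i \<omega>\<bar>^3 \<le> \<bar>T \<omega>\<bar>^3 + 3 * (W j \<omega> * (T \<omega> * \<bar>T \<omega>\<bar>)) + 3 * ((W j \<omega>)\<^sup>2 * \<bar>T \<omega>\<bar>) + 3 * \<bar>W j \<omega>\<bar>^3"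
      by (simp add: algebra_simps)
  qed
  also have "\<dots> = expectation (\<lambda>\<omega>. \<bar>T \<omega>\<bar>^3) + 3 * expectation (\<lambda>\<omega>. W j \<omega> * (T \<omega> * \<bar>T \<omega>\<bar>))
       + 3 * expectation (\<lambda>\<omega>. (W j \<omega>)\<^sup>2 * \<bar>T \<omega>\<bar>) + 3 * expectation (\<lambda>\<omega>. \<bar>W j \<omega>\<bar>^3)"
    using iT3 i1 i2 iw3 by simp
  also have "\<dots> = expectation (\<lambda>\<omega>. \<bar>T \<omega>\<bar>^3) + 3 * (expectation (\<lambda>\<omega>. (W j \<omega>)\<^sup>2) * expectation (\<lambda>\<omega>. \<bar>T \<omega>\<bar>))
       + 3 * expectation (\<lambda>\<omega>. \<bar>W j \<omega>\<bar>^3)"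
    unfolding m1 m2 Ew by simp
  also have "\<dots> \<le> (3 * card J * sqrt (card J * v) * v + 3 * card J * r) + 3 * (v * sqrt (card J * v)) + 3 * r"
    using IH insert.prems ET1 \<open>v \<ge> 0\<close>
    by (intro add_mono mult_left_mono mult_mono) (auto intro: integral_nonneg_AE)
  also have "\<dots> \<le> 3 * card (insert j J) * sqrt (card (insert j J) * v) * v + 3 * card (insert j J) * r"
  proof -
    have s: "sqrt (card J * v) \<le> sqrt (card (insert j J) * v)"
      using insert.hyps \<open>v \<ge> 0\<close> by (auto intro: mult_right_mono)
    have "3 * card J * sqrt (card J * v) * v + 3 * (v * sqrt (card J * v))
        = 3 * (card J + 1) * (sqrt (card J * v) * v)" by (simp add: algebra_simps)
    also have "\<dots> \<le> 3 * (card J + 1) * (sqrt (card (insert j J) * v) * v)"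
      using s \<open>v \<ge> 0\<close> by (intro mult_left_mono mult_right_mono) auto
    finally show ?thesis using insert.hyps by (simp add: algebra_simps)
  qed
  finally show ?case .
qed

end


lemma tele_aux:
  assumes "m \<ge> (1::nat)"
  shows "(\<Sum>k\<in>{m..<m+n}. 1 / (real k)\<^sup>2) \<le> 2 / m - 2 / (m + n)"
proof (induction n)
  case 0 then show ?case by simp
next
  case (Suc n)
  have k: "real (m + n) \<ge> 1" using assms by simp
  have "1 / (real (m+n))\<^sup>2 \<le> 2 / (m+n) - 2 / (m + n + 1)"
  proof -
    define x where "x = real (m+n)"
    have x: "x \<ge> 1" using k by (simp add: x_def)
    have "2 / x - 2 / (x + 1) = 2 / (x * (x+1))"
      using x by (simp add: field_simps)
    moreover have "1 / x\<^sup>2 \<le> 2 / (x * (x+1))"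
    proof -
      have "x * 1 \<le> x * x" using x by (intro mult_left_mono) auto
      then have a: "x*(x+1) \<le> 2*x\<^sup>2" by (simp add: power2_eq_square algebra_simps)
      have "2/(2*x\<^sup>2) \<le> 2/(x*(x+1))" using a x by (intro divide_left_mono) auto
      then show ?thesis by simp
    qed
    ultimately have "1/x\<^sup>2 \<le> 2/x - 2/(x+1)" by linarith
    then show ?thesis by (simp add: x_def add_ac)
  qed
  then show ?case using Suc by (simp add: algebra_simps)
qed

lemma tele:
  assumes "m \<ge> (1::nat)"
  shows "(\<Sum>k\<in>{m..N}. 1 / (real k)\<^sup>2) \<le> 2 / m"
proof (cases "m \<le> N")
  case True
  then have "{m..N} = {m..<m + (N + 1 - m)}" by auto
  then have "(\<Sum>k\<in>{m..N}. 1 / (real k)\<^sup>2) \<le> 2 / m - 2 / (m + (N + 1 - m))"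
    using tele_aux[OF assms, of "N+1-m"] by simp
  also have "\<dots> \<le> 2 / m" by simp
  finally show ?thesis .
qed simp

lemma ptA:
  fixes t :: real assumes "t \<ge> 0"
  shows "(\<Sum>k\<le>N. if real k < t then real k else 0) \<le> t\<^sup>2"
proof -
  define F where "F = {1..nat \<lfloor>t\<rfloor>}"
  have "(\<Sum>k\<le>N. if real k < t then real k else 0) \<le> (\<Sum>k\<le>N. if k \<in> F then t else 0)"
  proof (intro sum_mono)
    fix k assume "k \<in> {..N}"
    show "(if real k < t then real k else 0) \<le> (if k \<in> F then t else 0)"
    proof (cases "real k < t \<and> k \<ge> 1")
      case True
      then have "int k \<le> \<lfloor>t\<rfloor>" by (simp add: le_floor_iff)
      then have "k \<in> F" using True unfolding F_def by auto
      then show ?thesis using True by simp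
    next
      case False
      then show ?thesis using assms by auto
    qed
  qed
  also have "\<dots> = t * card ({..N} \<inter> F)"
    using sum.inter_restrict[of "{..N}" "\<lambda>_. t" F] by (simp add: mult.commute)
  also have "\<dots> \<le> t * card F"
  proof -
    have "card ({..N} \<inter> F) \<le> card F" by (intro card_mono) (auto simp: F_def)
    then show ?thesis using assms by (intro mult_left_mono) auto
  qed
  also have "card F = nat \<lfloor>t\<rfloor>" by (simp add: F_def)
  also have "real (nat \<lfloor>t\<rfloor>) \<le> t" using assms by simp
  then have "t * real (nat \<lfloor>t\<rfloor>) \<le> t * t" using assms by (intro mult_left_mono) auto
  finally show ?thesis by (simp add: power2_eq_square)
qed

lemma ptA':
  fixes y \<sigma> :: real assumes "\<sigma> > 0"
  shows "(\<Sum>k\<le>N. if \<sigma> * real k < \<bar>y\<bar> then real k else 0) \<le> y\<^sup>2 / \<sigma>\<^sup>2"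
proof -
  have "(\<Sum>k\<le>N. if \<sigma> * real k < \<bar>y\<bar> then real k else 0) = (\<Sum>k\<le>N. if real k < \<bar>y\<bar>/\<sigma> then real k else 0)"
    using assms by (intro sum.cong) (auto simp: field_simps)
  also have "\<dots> \<le> (\<bar>y\<bar>/\<sigma>)\<^sup>2" using assms by (intro ptA) auto
  finally show ?thesis by (simp add: power_divide)
qed

lemma ptB:
  fixes y \<sigma> :: real assumes "\<sigma> > 0"
  shows "(\<Sum>k\<le>N. (if \<bar>y\<bar> \<le> \<sigma> * real k then \<bar>y\<bar>^3 else 0) / (real k)\<^sup>2) \<le> 2 * \<sigma> * y\<^sup>2"
proof (cases "y = 0")
  case True
  have "(\<Sum>k\<le>N. (if \<bar>y\<bar> \<le> \<sigma> * real k then \<bar>y\<bar>^3 else 0) / (real k)\<^sup>2) = 0"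
    by (intro sum.neutral) (simp add: True)
  then show ?thesis using assms by simp
next
  case False
  define m where "m = nat \<lceil>\<bar>y\<bar>/\<sigma>\<rceil>"
  have ypos: "\<bar>y\<bar> > 0" using False by simp
  have c1: "1 \<le> \<lceil>\<bar>y\<bar>/\<sigma>\<rceil>"
  proof -
    have "0 < \<bar>y\<bar>/\<sigma>" using ypos assms by simp
    then show ?thesis by simp
  qed
  have mreal: "real m = of_int \<lceil>\<bar>y\<bar>/\<sigma>\<rceil>" unfolding m_def using c1 by (intro of_nat_nat) simp
  have m1: "m \<ge> 1"
  proof -
    have "real m \<ge> 1" using c1 mreal by linarith
    then show ?thesis by simp
  qed
  have ym: "\<bar>y\<bar> \<le> \<sigma> * m"
  proof -
    have "\<bar>y\<bar>/\<sigma> \<le> m" using mreal le_of_int_ceiling[of "\<bar>y\<bar>/\<sigma>"] by linarith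
    then show ?thesis using assms by (simp add: field_simps)
  qed
  have "(\<Sum>k\<le>N. (if \<bar>y\<bar> \<le> \<sigma> * real k then \<bar>y\<bar>^3 else 0) / (real k)\<^sup>2)
      \<le> (\<Sum>k\<le>N. if k \<in> {m..N} then \<bar>y\<bar>^3 * (1 / (real k)\<^sup>2) else 0)"
  proof (intro sum_mono)
    fix k assume k: "k \<in> {..N}"
    show "(if \<bar>y\<bar> \<le> \<sigma> * real k then \<bar>y\<bar>^3 else 0) / (real k)\<^sup>2 \<le> (if k \<in> {m..N} then \<bar>y\<bar>^3 * (1 / (real k)\<^sup>2) else 0)"
    proof (cases "\<bar>y\<bar> \<le> \<sigma> * real k")
      case True
      then have "\<bar>y\<bar>/\<sigma> \<le> real k" using assms by (simp add: field_simps)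
      then have "\<lceil>\<bar>y\<bar>/\<sigma>\<rceil> \<le> int k" by (simp add: ceiling_le_iff)
      then have "m \<le> k" unfolding m_def using \<open>\<bar>y\<bar>/\<sigma> \<le> real k\<close> by simp
      then show ?thesis using True k by simp
    next
      case False then show ?thesis by simp
    qed
  qed
  also have "\<dots> = (\<Sum>k\<in>{..N} \<inter> {m..N}. \<bar>y\<bar>^3 * (1 / (real k)\<^sup>2))" by (rule sum.inter_restrict[symmetric]) simp
  also have "{..N} \<inter> {m..N} = {m..N}" by auto
  also have "(\<Sum>k\<in>{m..N}. \<bar>y\<bar>^3 * (1 / (real k)\<^sup>2)) = \<bar>y\<bar>^3 * (\<Sum>k\<in>{m..N}. 1 / (real k)\<^sup>2)"
    by (simp add: sum_distrib_left)
  also have "\<dots> \<le> \<bar>y\<bar>^3 * (2 / m)" by (intro mult_left_mono tele m1) auto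
  also have "\<dots> = 2 * y\<^sup>2 * (\<bar>y\<bar> / m)" by (simp add: power2_eq_square power3_eq_cube)
  also have "\<dots> \<le> 2 * y\<^sup>2 * \<sigma>"
    using ym m1 by (intro mult_left_mono) (auto simp: field_simps)
  finally show ?thesis by (simp add: algebra_simps)
qed


definition tr :: "real \<Rightarrow> nat \<Rightarrow> real \<Rightarrow> real" where
  "tr s k y = (if \<bar>y\<bar> \<le> s * real k then y else 0)"

lemma tr_measurable[measurable]: "tr s k \<in> borel_measurable borel"
  unfolding tr_def by measurable

lemma tr_abs_le: "\<bar>tr s k y\<bar> \<le> \<bar>y\<bar>"
  unfolding tr_def by auto

lemma tr_abs_le2: "s \<ge> 0 \<Longrightarrow> \<bar>tr s k y\<bar> \<le> s * real k"
  unfolding tr_def by auto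

locale setting = prob_space M for M :: "'a measure" +
  fixes X :: "'a \<Rightarrow> real" and Xa :: "nat \<Rightarrow> nat \<Rightarrow> 'a \<Rightarrow> real" and \<mu> \<sigma> :: real
  assumes Xm[measurable]: "X \<in> borel_measurable M"
    and X2: "integrable M (\<lambda>\<omega>. (X \<omega>)\<^sup>2)"
    and mu: "\<mu> = expectation X"
    and sig: "\<sigma> = sqrt (variance X)"
    and ind: "indep_vars (\<lambda>_. borel) (\<lambda>(i, k). Xa i k) {(i, k). 1 \<le> i \<and> i \<le> k}"
    and dist: "\<And>i k. 1 \<le> i \<Longrightarrow> i \<le> k \<Longrightarrow> distr M borel (Xa i k) = distr M borel X"
begin

lemma Xa_m[measurable]: "1 \<le> i \<Longrightarrow> i \<le> k \<Longrightarrow> Xa i k \<in> borel_measurable M"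
  using indep_rv[OF ind, of "(i,k)"] by simp

lemma X_int: "integrable M X"
  by (rule square_integrable_imp_integrable[OF Xm X2])

lemma transfer:
  fixes f :: "real \<Rightarrow> real"
  assumes "1 \<le> i" "i \<le> k" "f \<in> borel_measurable borel"
  shows "(\<integral>\<omega>. f (Xa i k \<omega>) \<partial>M) = (\<integral>\<omega>. f (X \<omega>) \<partial>M)"
proof -
  have "(\<integral>\<omega>. f (Xa i k \<omega>) \<partial>M) = integral\<^sup>L (distr M borel (Xa i k)) f"
    by (rule integral_distr[OF Xa_m[OF assms(1,2)] assms(3), symmetric])
  also have "\<dots> = integral\<^sup>L (distr M borel X) f" using dist[OF assms(1,2)] by simp
  also have "\<dots> = (\<integral>\<omega>. f (X \<omega>) \<partial>M)" by (rule integral_distr[OF Xm assms(3)])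
  finally show ?thesis .
qed

lemma transfer_prob:
  assumes "1 \<le> i" "i \<le> k" "B \<in> sets borel"
  shows "prob {\<omega> \<in> space M. Xa i k \<omega> \<in> B} = prob {\<omega> \<in> space M. X \<omega> \<in> B}"
proof -
  have "prob {\<omega> \<in> space M. Xa i k \<omega> \<in> B} = measure (distr M borel (Xa i k)) B"
    using assms by (subst measure_distr) (auto simp: vimage_def Int_def conj_commute)
  also have "\<dots> = measure (distr M borel X) B" using dist[OF assms(1,2)] by simp
  also have "\<dots> = prob {\<omega> \<in> space M. X \<omega> \<in> B}"
    using assms by (subst measure_distr) (auto simp: vimage_def Int_def conj_commute)
  finally show ?thesis .
qed

lemma EY0: "expectation (\<lambda>\<omega>. X \<omega> - \<mu>) = 0"
  using X_int by (simp add: mu prob_space)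

lemma var_nn: "variance X \<ge> 0"
  by (rule integral_nonneg_AE) auto

lemma sig_nn: "\<sigma> \<ge> 0" by (simp add: sig)

lemma EY2: "expectation (\<lambda>\<omega>. (X \<omega> - \<mu>)\<^sup>2) = \<sigma>\<^sup>2"
  using var_nn by (simp add: sig mu)

lemma Y2_int: "integrable M (\<lambda>\<omega>. (X \<omega> - \<mu>)\<^sup>2)"
proof -
  have "(\<lambda>\<omega>. (X \<omega> - \<mu>)\<^sup>2) = (\<lambda>\<omega>. (X \<omega>)\<^sup>2 - 2 * \<mu> * X \<omega> + \<mu>\<^sup>2)"
    by (auto simp: power2_eq_square algebra_simps)
  then show ?thesis using X2 X_int by simp
qed

definition "mm k = expectation (\<lambda>\<omega>. tr \<sigma> k (X \<omega> - \<mu>))"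
definition "aa k = expectation (\<lambda>\<omega>. (tr \<sigma> k (X \<omega> - \<mu>))\<^sup>2)"
definition "q3 k = expectation (\<lambda>\<omega>. \<bar>tr \<sigma> k (X \<omega> - \<mu>)\<bar>^3)"
definition "q4 k = expectation (\<lambda>\<omega>. (tr \<sigma> k (X \<omega> - \<mu>))^4)"

lemma trY_bnd: "bnd_on (space M) (\<lambda>\<omega>. tr \<sigma> k (f \<omega>))"
  using tr_abs_le2[OF sig_nn] by (intro bnd_onI) blast

lemma trY_int_pow: "integrable M (\<lambda>\<omega>. (tr \<sigma> k (X \<omega> - \<mu>))^p)"
  by (intro bnd_integrable bnd_on_power trY_bnd) auto

lemma trY_int_abs_pow: "integrable M (\<lambda>\<omega>. \<bar>tr \<sigma> k (X \<omega> - \<mu>)\<bar>^p)"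
  by (intro bnd_integrable bnd_on_power bnd_on_abs trY_bnd) auto

lemma trY_int: "integrable M (\<lambda>\<omega>. tr \<sigma> k (X \<omega> - \<mu>))"
  by (intro bnd_integrable trY_bnd) auto

lemma aa_le: "aa k \<le> \<sigma>\<^sup>2"
proof -
  have "aa k \<le> expectation (\<lambda>\<omega>. (X \<omega> - \<mu>)\<^sup>2)"
    unfolding aa_def
  proof (rule integral_mono[OF trY_int_pow Y2_int])
    fix \<omega> show "(tr \<sigma> k (X \<omega> - \<mu>))\<^sup>2 \<le> (X \<omega> - \<mu>)\<^sup>2"
      using tr_abs_le[of \<sigma> k "X \<omega> - \<mu>"] by (simp add: abs_le_square_iff)
  qed
  then show ?thesis by (simp add: EY2)
qed

lemma aa_nn: "aa k \<ge> 0"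
  unfolding aa_def by (rule integral_nonneg_AE) auto

lemma mm_bound: "k \<ge> 1 \<Longrightarrow> \<bar>mm k\<bar> \<le> \<sigma> / k"
proof (cases "\<sigma> = 0")
  case True
  then have "\<And>y. tr \<sigma> k y = 0" by (simp add: tr_def)
  then show ?thesis unfolding mm_def by (simp add: True)
next
  case False
  assume k: "k \<ge> 1"
  have sp: "\<sigma> > 0" using False sig_nn by simp
  have "mm k = expectation (\<lambda>\<omega>. X \<omega> - \<mu>) - expectation (\<lambda>\<omega>. (X \<omega> - \<mu>) - tr \<sigma> k (X \<omega> - \<mu>))"
    unfolding mm_def using X_int trY_int by simp
  then have "\<bar>mm k\<bar> = \<bar>expectation (\<lambda>\<omega>. (X \<omega> - \<mu>) - tr \<sigma> k (X \<omega> - \<mu>))\<bar>" using EY0 by simp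
  also have "\<dots> \<le> expectation (\<lambda>\<omega>. \<bar>(X \<omega> - \<mu>) - tr \<sigma> k (X \<omega> - \<mu>)\<bar>)"
    by (rule integral_abs_bound)
  also have "\<dots> \<le> expectation (\<lambda>\<omega>. (X \<omega> - \<mu>)\<^sup>2 / (\<sigma> * k))"
  proof (rule integral_mono)
    show "integrable M (\<lambda>\<omega>. \<bar>(X \<omega> - \<mu>) - tr \<sigma> k (X \<omega> - \<mu>)\<bar>)" using X_int trY_int by simp
    show "integrable M (\<lambda>\<omega>. (X \<omega> - \<mu>)\<^sup>2 / (\<sigma> * k))" using Y2_int by simp
    fix \<omega>
    define y where "y = X \<omega> - \<mu>"
    have "\<bar>y - tr \<sigma> k y\<bar> \<le> y\<^sup>2 / (\<sigma> * k)"
    proof (cases "\<bar>y\<bar> \<le> \<sigma> * real k")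
      case True then show ?thesis by (simp add: tr_def)
    next
      case False
      then have "\<sigma> * k \<le> \<bar>y\<bar>" by simp
      then have "\<bar>y\<bar> * (\<sigma> * k) \<le> \<bar>y\<bar> * \<bar>y\<bar>" by (intro mult_left_mono) auto
      then have "\<bar>y\<bar> \<le> y\<^sup>2 / (\<sigma> * k)" using sp k by (simp add: field_simps power2_eq_square)
      then show ?thesis using False by (simp add: tr_def)
    qed
    then show "\<bar>(X \<omega> - \<mu>) - tr \<sigma> k (X \<omega> - \<mu>)\<bar> \<le> (X \<omega> - \<mu>)\<^sup>2 / (\<sigma> * k)" by (simp add: y_def)
  qed
  also have "\<dots> = \<sigma>\<^sup>2 / (\<sigma> * k)" using EY2 by simp
  also have "\<dots> = \<sigma> / k" using sp by (simp add: power2_eq_square)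
  finally show ?thesis .
qed

end


context setting begin

lemma prob_as_int:
  assumes "A \<in> sets M" "A \<subseteq> space M"
  shows "c * prob A = expectation (\<lambda>\<omega>. c * indicator A \<omega>)"
  using assms by (simp add: Int_absorb2)

lemma SA: "summable (\<lambda>k. real k * prob {\<omega> \<in> space M. \<sigma> * real k < \<bar>X \<omega> - \<mu>\<bar>})"
proof (cases "\<sigma> = 0")
  case True
  have "AE \<omega> in M. (X \<omega> - \<mu>)\<^sup>2 = 0"
    using integral_nonneg_eq_0_iff_AE[OF Y2_int] EY2 True by simp
  then have "AE \<omega> in M. \<not> (\<sigma> * real k < \<bar>X \<omega> - \<mu>\<bar>)" for k
    by eventually_elim (simp add: True)
  then have "prob {\<omega> \<in> space M. \<sigma> * real k < \<bar>X \<omega> - \<mu>\<bar>} = 0" for k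
    by (simp add: measure_def emeasure_eq_0_AE)
  then show ?thesis by simp
next
  case False
  then have sp: "\<sigma> > 0" using sig_nn by simp
  show ?thesis
  proof (rule bounded_imp_summable)
    show "0 \<le> real k * prob {\<omega> \<in> space M. \<sigma> * real k < \<bar>X \<omega> - \<mu>\<bar>}" for k by simp
    fix N
    have "(\<Sum>k\<le>N. real k * prob {\<omega> \<in> space M. \<sigma> * real k < \<bar>X \<omega> - \<mu>\<bar>})
        = (\<Sum>k\<le>N. expectation (\<lambda>\<omega>. if \<sigma> * real k < \<bar>X \<omega> - \<mu>\<bar> then real k else 0))"
    proof (intro sum.cong refl)
      fix k
      have "real k * prob {\<omega> \<in> space M. \<sigma> * real k < \<bar>X \<omega> - \<mu>\<bar>}
          = expectation (\<lambda>\<omega>. real k * indicator {\<omega> \<in> space M. \<sigma> * real k < \<bar>X \<omega> - \<mu>\<bar>} \<omega>)"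
        by (rule prob_as_int) auto
      also have "\<dots> = expectation (\<lambda>\<omega>. if \<sigma> * real k < \<bar>X \<omega> - \<mu>\<bar> then real k else 0)"
        by (intro Bochner_Integration.integral_cong) (auto simp: indicator_def)
      finally show "real k * prob {\<omega> \<in> space M. \<sigma> * real k < \<bar>X \<omega> - \<mu>\<bar>}
          = expectation (\<lambda>\<omega>. if \<sigma> * real k < \<bar>X \<omega> - \<mu>\<bar> then real k else 0)" .
    qed
    also have "\<dots> = expectation (\<lambda>\<omega>. \<Sum>k\<le>N. if \<sigma> * real k < \<bar>X \<omega> - \<mu>\<bar> then real k else 0)"
    proof (rule Bochner_Integration.integral_sum[symmetric])
      fix k show "integrable M (\<lambda>\<omega>. if \<sigma> * real k < \<bar>X \<omega> - \<mu>\<bar> then real k else 0)"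
        by (intro bnd_integrable bnd_onI[of _ _ "real k"]) auto
    qed
    also have "\<dots> \<le> expectation (\<lambda>\<omega>. (X \<omega> - \<mu>)\<^sup>2 / \<sigma>\<^sup>2)"
    proof (rule integral_mono)
      show "integrable M (\<lambda>\<omega>. \<Sum>k\<le>N. if \<sigma> * real k < \<bar>X \<omega> - \<mu>\<bar> then real k else 0)"
        by (intro bnd_integrable bnd_on_sum bnd_onI[of _ _ "real N"]) auto
      show "integrable M (\<lambda>\<omega>. (X \<omega> - \<mu>)\<^sup>2 / \<sigma>\<^sup>2)" using Y2_int by simp
      fix \<omega> show "(\<Sum>k\<le>N. if \<sigma> * real k < \<bar>X \<omega> - \<mu>\<bar> then real k else 0) \<le> (X \<omega> - \<mu>)\<^sup>2 / \<sigma>\<^sup>2"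
        by (rule ptA'[OF sp])
    qed
    also have "\<dots> = 1" using EY2 sp by simp
    finally show "(\<Sum>k\<le>N. real k * prob {\<omega> \<in> space M. \<sigma> * real k < \<bar>X \<omega> - \<mu>\<bar>}) \<le> 1" .
  qed
qed

lemma SB: "summable (\<lambda>k. q3 k / (real k)\<^sup>2)"
proof (cases "\<sigma> = 0")
  case True
  then have "\<And>k y. tr \<sigma> k y = 0" by (simp add: tr_def)
  then have "\<And>k. q3 k = 0" unfolding q3_def by simp
  then show ?thesis by simp
next
  case False
  then have sp: "\<sigma> > 0" using sig_nn by simp
  show ?thesis
  proof (rule bounded_imp_summable)
    show "0 \<le> q3 k / (real k)\<^sup>2" for k unfolding q3_def by (intro divide_nonneg_nonneg integral_nonneg_AE) auto
    fix N
    have "(\<Sum>k\<le>N. q3 k / (real k)\<^sup>2) = (\<Sum>k\<le>N. expectation (\<lambda>\<omega>. \<bar>tr \<sigma> k (X \<omega> - \<mu>)\<bar>^3 / (real k)\<^sup>2))"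
      unfolding q3_def by simp
    also have "\<dots> = expectation (\<lambda>\<omega>. \<Sum>k\<le>N. \<bar>tr \<sigma> k (X \<omega> - \<mu>)\<bar>^3 / (real k)\<^sup>2)"
    proof (rule Bochner_Integration.integral_sum[symmetric])
      fix k show "integrable M (\<lambda>\<omega>. \<bar>tr \<sigma> k (X \<omega> - \<mu>)\<bar>^3 / (real k)\<^sup>2)"
        using trY_int_abs_pow by simp
    qed
    also have "\<dots> \<le> expectation (\<lambda>\<omega>. 2 * \<sigma> * (X \<omega> - \<mu>)\<^sup>2)"
    proof (rule integral_mono)
      show "integrable M (\<lambda>\<omega>. \<Sum>k\<le>N. \<bar>tr \<sigma> k (X \<omega> - \<mu>)\<bar>^3 / (real k)\<^sup>2)"
        using trY_int_abs_pow by simp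
      show "integrable M (\<lambda>\<omega>. 2 * \<sigma> * (X \<omega> - \<mu>)\<^sup>2)" using Y2_int by simp
      fix \<omega>
      have "(\<Sum>k\<le>N. \<bar>tr \<sigma> k (X \<omega> - \<mu>)\<bar>^3 / (real k)\<^sup>2)
          = (\<Sum>k\<le>N. (if \<bar>X \<omega> - \<mu>\<bar> \<le> \<sigma> * real k then \<bar>X \<omega> - \<mu>\<bar>^3 else 0) / (real k)\<^sup>2)"
        by (intro sum.cong) (auto simp: tr_def)
      also have "\<dots> \<le> 2 * \<sigma> * (X \<omega> - \<mu>)\<^sup>2" by (rule ptB[OF sp])
      finally show "(\<Sum>k\<le>N. \<bar>tr \<sigma> k (X \<omega> - \<mu>)\<bar>^3 / (real k)\<^sup>2) \<le> 2 * \<sigma> * (X \<omega> - \<mu>)\<^sup>2" .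
    qed
    also have "\<dots> = 2 * \<sigma> * \<sigma>\<^sup>2" using EY2 Y2_int by simp
    finally show "(\<Sum>k\<le>N. q3 k / (real k)\<^sup>2) \<le> 2 * \<sigma> * \<sigma>\<^sup>2" .
  qed
qed

lemma q4_le: "q4 k \<le> \<sigma> * real k * q3 k"
proof -
  have "q4 k \<le> expectation (\<lambda>\<omega>. \<sigma> * real k * \<bar>tr \<sigma> k (X \<omega> - \<mu>)\<bar>^3)"
    unfolding q4_def
  proof (rule integral_mono)
    show "integrable M (\<lambda>\<omega>. (tr \<sigma> k (X \<omega> - \<mu>))^4)" by (rule trY_int_pow)
    show "integrable M (\<lambda>\<omega>. \<sigma> * real k * \<bar>tr \<sigma> k (X \<omega> - \<mu>)\<bar>^3)" using trY_int_abs_pow by simp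
    fix \<omega>
    define t where "t = tr \<sigma> k (X \<omega> - \<mu>)"
    have t: "\<bar>t\<bar> \<le> \<sigma> * real k" unfolding t_def by (rule tr_abs_le2[OF sig_nn])
    have "t^4 = \<bar>t\<bar> * \<bar>t\<bar>^3" by (simp add: power_abs[symmetric] power3_eq_cube power4_eq_xxxx abs_mult[symmetric])
    also have "\<dots> \<le> \<sigma> * real k * \<bar>t\<bar>^3" using t by (intro mult_right_mono) auto
    finally show "(tr \<sigma> k (X \<omega> - \<mu>))^4 \<le> \<sigma> * real k * \<bar>tr \<sigma> k (X \<omega> - \<mu>)\<bar>^3" by (simp add: t_def)
  qed
  then show ?thesis unfolding q3_def by simp
qed

lemma SC: "summable (\<lambda>k. q4 k / (real k)^3)"
proof (rule summable_comparison_test)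
  show "summable (\<lambda>k. \<sigma> * (q3 k / (real k)\<^sup>2))" using SB by (rule summable_mult)
  show "\<exists>N. \<forall>n\<ge>N. norm (q4 n / (real n)^3) \<le> \<sigma> * (q3 n / (real n)\<^sup>2)"
  proof (intro exI[of _ 1] allI impI)
    fix n :: nat assume "n \<ge> 1"
    have q4n: "q4 n \<ge> 0" unfolding q4_def by (rule integral_nonneg_AE) (auto simp: zero_le_even_power)
    have "norm (q4 n / (real n)^3) = q4 n / (real n)^3" using q4n by simp
    also have "\<dots> \<le> \<sigma> * real n * q3 n / (real n)^3" using q4_le \<open>n \<ge> 1\<close> by (intro divide_right_mono) auto
    also have "\<dots> = \<sigma> * (q3 n / (real n)\<^sup>2)" using \<open>n \<ge> 1\<close> by (simp add: power2_eq_square power3_eq_cube field_simps)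
    finally show "norm (q4 n / (real n)^3) \<le> \<sigma> * (q3 n / (real n)\<^sup>2)" .
  qed
qed

end


lemma pow3_convex: fixes a b :: real shows "\<bar>a + b\<bar>^3 \<le> 4 * (\<bar>a\<bar>^3 + \<bar>b\<bar>^3)"
proof -
  define x y where "x = \<bar>a\<bar>" "y = \<bar>b\<bar>"
  have xy: "x \<ge> 0" "y \<ge> 0" by (auto simp: x_y_def)
  have "\<bar>a + b\<bar>^3 \<le> (x + y)^3" unfolding x_y_def by (intro power_mono abs_triangle_ineq) auto
  also have "\<dots> \<le> 4 * (x^3 + y^3)"
  proof -
    have "4 * (x^3 + y^3) - (x + y)^3 = 3 * (x + y) * (x - y)\<^sup>2"
      by (simp add: power2_eq_square power3_eq_cube algebra_simps)
    also have "\<dots> \<ge> 0" using xy by simp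
    finally show ?thesis by simp
  qed
  finally show ?thesis by (simp add: x_y_def)
qed

lemma pow4_convex: fixes a b :: real shows "(a + b)^4 \<le> 8 * (a^4 + b^4)"
proof -
  have "(a + b)^4 = ((a+b)\<^sup>2)\<^sup>2" by simp
  also have "(a+b)\<^sup>2 \<le> 2 * (a\<^sup>2 + b\<^sup>2)"
  proof -
    have "2 * (a\<^sup>2 + b\<^sup>2) - (a+b)\<^sup>2 = (a - b)\<^sup>2" by (simp add: power2_eq_square algebra_simps)
    then show ?thesis by (smt (verit) zero_le_power2)
  qed
  then have "((a+b)\<^sup>2)\<^sup>2 \<le> (2 * (a\<^sup>2 + b\<^sup>2))\<^sup>2" by (intro power_mono) auto
  also have "(2 * (a\<^sup>2 + b\<^sup>2))\<^sup>2 \<le> 8 * (a^4 + b^4)"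
  proof -
    have "8 * (a^4 + b^4) - (2 * (a\<^sup>2 + b\<^sup>2))\<^sup>2 = 4 * (a\<^sup>2 - b\<^sup>2)\<^sup>2"
      by (simp add: power2_eq_square power4_eq_xxxx algebra_simps)
    then show ?thesis by (smt (verit) zero_le_power2)
  qed
  finally show ?thesis .
qed

context setting begin

definition "R (k::nat) = (\<lambda>i. (i, k)) ` {1..k}"
definition "W k p \<omega> = tr \<sigma> k ((\<lambda>(i, k). Xa i k) p \<omega> - \<mu>) - mm k"
definition "T k \<omega> = (\<Sum>p\<in>R k. W k p \<omega>)"
definition "St k \<omega> = (\<Sum>i=1..k. tr \<sigma> k (Xa i k \<omega> - \<mu>)) / real k"
definition "vv k = expectation (\<lambda>\<omega>. (tr \<sigma> k (X \<omega> - \<mu>) - mm k)\<^sup>2)"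

lemma R_sub: "R k \<subseteq> {(i, k). 1 \<le> i \<and> i \<le> k}" by (auto simp: R_def)
lemma R_fin: "finite (R k)" by (simp add: R_def)
lemma R_card: "card (R k) = k" unfolding R_def by (subst card_image) (auto simp: inj_on_def)

lemma row_indep: "indep_vars (\<lambda>_. borel) (W k) (R k)"
proof -
  have "indep_vars (\<lambda>_. borel) (\<lambda>(i, k). Xa i k) (R k)" by (rule indep_vars_subset[OF ind R_sub])
  then have "indep_vars (\<lambda>_. borel) (\<lambda>p x. (\<lambda>y. tr \<sigma> k (y - \<mu>) - mm k) ((\<lambda>(i, k). Xa i k) p x)) (R k)"
    by (rule indep_vars_compose2) auto
  then show ?thesis unfolding W_def by simp
qed

lemma W_at: "W k (i, k) \<omega> = tr \<sigma> k (Xa i k \<omega> - \<mu>) - mm k" by (simp add: W_def)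

lemma T_eq: "T k \<omega> = (\<Sum>i=1..k. tr \<sigma> k (Xa i k \<omega> - \<mu>)) - real k * mm k"
proof -
  have "T k \<omega> = (\<Sum>i=1..k. W k (i, k) \<omega>)" unfolding T_def R_def
    by (subst sum.reindex) (auto simp: inj_on_def)
  also have "\<dots> = (\<Sum>i=1..k. tr \<sigma> k (Xa i k \<omega> - \<mu>)) - real k * mm k"
    by (simp add: W_at sum_subtractf)
  finally show ?thesis .
qed

lemma St_eq: "k \<ge> 1 \<Longrightarrow> St k \<omega> = T k \<omega> / real k + mm k"
  unfolding St_def T_eq by (simp add: field_simps)

lemma W_bnd: "bnd_on (space M) (W k p)"
  unfolding W_def by (intro bnd_on_diff trY_bnd bnd_on_const)

lemma T_bnd: "bnd_on (space M) (T k)"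
  unfolding T_def by (intro bnd_on_sum W_bnd)

lemma St_bnd: "bnd_on (space M) (St k)"
  unfolding St_def by (intro bnd_on_divide bnd_on_sum trY_bnd)

lemma St_m[measurable]: "St k \<in> borel_measurable M"
  unfolding St_def by measurable

lemma T_m[measurable]: "T k \<in> borel_measurable M"
proof -
  have "T k = (\<lambda>\<omega>. (\<Sum>i=1..k. tr \<sigma> k (Xa i k \<omega> - \<mu>)) - real k * mm k)" using T_eq by auto
  also have "\<dots> \<in> borel_measurable M" by measurable
  finally show ?thesis .
qed

lemma W_transfer:
  fixes f :: "real \<Rightarrow> real"
  assumes "p \<in> R k" "f \<in> borel_measurable borel"
  shows "expectation (\<lambda>\<omega>. f (W k p \<omega>)) = expectation (\<lambda>\<omega>. f (tr \<sigma> k (X \<omega> - \<mu>) - mm k))"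
proof -
  obtain i where p: "p = (i, k)" "1 \<le> i" "i \<le> k" using assms unfolding R_def by auto
  have "expectation (\<lambda>\<omega>. f (W k p \<omega>)) = expectation (\<lambda>\<omega>. (\<lambda>x. f (tr \<sigma> k (x - \<mu>) - mm k)) (Xa i k \<omega>))"
    by (simp add: p W_at)
  also have "\<dots> = expectation (\<lambda>\<omega>. (\<lambda>x. f (tr \<sigma> k (x - \<mu>) - mm k)) (X \<omega>))"
    using assms by (intro transfer p) auto
  finally show ?thesis by simp
qed

lemma W_mean: "p \<in> R k \<Longrightarrow> expectation (W k p) = 0"
  using W_transfer[of p k "\<lambda>x. x"] trY_int by (simp add: mm_def prob_space)

lemma W_sq: "p \<in> R k \<Longrightarrow> expectation (\<lambda>\<omega>. (W k p \<omega>)\<^sup>2) = vv k"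
  using W_transfer[of p k "\<lambda>x. x\<^sup>2"] by (simp add: vv_def)

lemma vv_eq: "vv k = aa k - (mm k)\<^sup>2"
proof -
  have "vv k = expectation (\<lambda>\<omega>. (tr \<sigma> k (X \<omega> - \<mu>))\<^sup>2 - 2 * mm k * tr \<sigma> k (X \<omega> - \<mu>) + (mm k)\<^sup>2)"
    unfolding vv_def by (intro Bochner_Integration.integral_cong) (auto simp: power2_eq_square algebra_simps)
  also have "\<dots> = aa k - 2 * mm k * mm k + (mm k)\<^sup>2"
    using trY_int_pow[of k 2] trY_int[of k] by (simp add: aa_def mm_def prob_space)
  finally show ?thesis by (simp add: power2_eq_square)
qed

lemma vv_nn: "vv k \<ge> 0" unfolding vv_def by (rule integral_nonneg_AE) auto

lemma vv_le: "vv k \<le> \<sigma>\<^sup>2" using vv_eq aa_le[of k] by (smt (verit) zero_le_power2)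

lemma W_4: "p \<in> R k \<Longrightarrow> expectation (\<lambda>\<omega>. (W k p \<omega>)^4) \<le> 8 * (q4 k + (mm k)^4)"
proof -
  assume p: "p \<in> R k"
  have "expectation (\<lambda>\<omega>. (W k p \<omega>)^4) = expectation (\<lambda>\<omega>. (tr \<sigma> k (X \<omega> - \<mu>) - mm k)^4)"
    using W_transfer[OF p, of "\<lambda>x. x^4"] by simp
  also have "\<dots> \<le> expectation (\<lambda>\<omega>. 8 * ((tr \<sigma> k (X \<omega> - \<mu>))^4 + (mm k)^4))"
  proof (rule integral_mono)
    show "integrable M (\<lambda>\<omega>. (tr \<sigma> k (X \<omega> - \<mu>) - mm k)^4)"
      by (intro bnd_integrable bnd_on_power bnd_on_diff trY_bnd bnd_on_const) auto
    show "integrable M (\<lambda>\<omega>. 8 * ((tr \<sigma> k (X \<omega> - \<mu>))^4 + (mm k)^4))"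
      using trY_int_pow[of k 4] by simp
    fix \<omega> show "(tr \<sigma> k (X \<omega> - \<mu>) - mm k)^4 \<le> 8 * ((tr \<sigma> k (X \<omega> - \<mu>))^4 + (mm k)^4)"
      using pow4_convex[of "tr \<sigma> k (X \<omega> - \<mu>)" "- mm k"] by simp
  qed
  also have "\<dots> = 8 * (q4 k + (mm k)^4)" using trY_int_pow[of k 4] by (simp add: q4_def prob_space)
  finally show ?thesis .
qed

lemma W_3: "p \<in> R k \<Longrightarrow> expectation (\<lambda>\<omega>. \<bar>W k p \<omega>\<bar>^3) \<le> 4 * (q3 k + \<bar>mm k\<bar>^3)"
proof -
  assume p: "p \<in> R k"
  have "expectation (\<lambda>\<omega>. \<bar>W k p \<omega>\<bar>^3) = expectation (\<lambda>\<omega>. \<bar>tr \<sigma> k (X \<omega> - \<mu>) - mm k\<bar>^3)"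
    using W_transfer[OF p, of "\<lambda>x. \<bar>x\<bar>^3"] by simp
  also have "\<dots> \<le> expectation (\<lambda>\<omega>. 4 * (\<bar>tr \<sigma> k (X \<omega> - \<mu>)\<bar>^3 + \<bar>mm k\<bar>^3))"
  proof (rule integral_mono)
    show "integrable M (\<lambda>\<omega>. \<bar>tr \<sigma> k (X \<omega> - \<mu>) - mm k\<bar>^3)"
      by (intro bnd_integrable bnd_on_power bnd_on_abs bnd_on_diff trY_bnd bnd_on_const) auto
    show "integrable M (\<lambda>\<omega>. 4 * (\<bar>tr \<sigma> k (X \<omega> - \<mu>)\<bar>^3 + \<bar>mm k\<bar>^3))"
      using trY_int_abs_pow[of k 3] by simp
    fix \<omega> show "\<bar>tr \<sigma> k (X \<omega> - \<mu>) - mm k\<bar>^3 \<le> 4 * (\<bar>tr \<sigma> k (X \<omega> - \<mu>)\<bar>^3 + \<bar>mm k\<bar>^3)"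
      using pow3_convex[of "tr \<sigma> k (X \<omega> - \<mu>)" "- mm k"] by simp
  qed
  also have "\<dots> = 4 * (q3 k + \<bar>mm k\<bar>^3)" using trY_int_abs_pow[of k 3] by (simp add: q3_def prob_space)
  finally show ?thesis .
qed

lemma T_mom2: "expectation (\<lambda>\<omega>. (T k \<omega>)\<^sup>2) = real k * vv k"
proof -
  have "expectation (\<lambda>\<omega>. (T k \<omega>)\<^sup>2) = (\<Sum>p\<in>R k. expectation (\<lambda>\<omega>. (W k p \<omega>)\<^sup>2))"
    unfolding T_def by (intro sum_moment2 R_fin row_indep W_bnd W_mean)
  also have "\<dots> = (\<Sum>p\<in>R k. vv k)" by (intro sum.cong) (auto simp: W_sq)
  finally show ?thesis by (simp add: R_card)
qed

lemma T_mean: "expectation (T k) = 0"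
  unfolding T_def by (intro sum_mean0 row_indep W_bnd W_mean)

lemma T_mom4: "expectation (\<lambda>\<omega>. (T k \<omega>)^4) \<le> real k * (8 * (q4 k + (mm k)^4)) + 3 * (real k)\<^sup>2 * (\<sigma>\<^sup>2)\<^sup>2"
proof -
  have "expectation (\<lambda>\<omega>. (T k \<omega>)^4) \<le> card (R k) * (8 * (q4 k + (mm k)^4)) + 3 * (card (R k))\<^sup>2 * (\<sigma>\<^sup>2)\<^sup>2"
    unfolding T_def
    by (intro sum_moment4 R_fin row_indep W_bnd W_mean W_4) (auto simp: W_sq vv_le)
  then show ?thesis by (simp add: R_card)
qed

lemma T_mom3: "expectation (\<lambda>\<omega>. \<bar>T k \<omega>\<bar>^3) \<le> 3 * real k * sqrt (real k * \<sigma>\<^sup>2) * \<sigma>\<^sup>2 + 3 * real k * (4 * (q3 k + \<bar>mm k\<bar>^3))"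
proof -
  have "expectation (\<lambda>\<omega>. \<bar>T k \<omega>\<bar>^3) \<le> 3 * card (R k) * sqrt (card (R k) * \<sigma>\<^sup>2) * \<sigma>\<^sup>2 + 3 * card (R k) * (4 * (q3 k + \<bar>mm k\<bar>^3))"
    unfolding T_def
    by (intro sum_moment3 R_fin row_indep W_bnd W_mean W_3) (auto simp: W_sq vv_le)
  then show ?thesis by (simp add: R_card)
qed

end


lemma summable_sqrt_div: "summable (\<lambda>k. sqrt (real k) / (real k)\<^sup>2)"
proof -
  have "summable (\<lambda>k. real k powr (-3/2))" by (subst summable_real_powr_iff) simp
  moreover have "eventually (\<lambda>k. real k powr (-3/2) = sqrt (real k) / (real k)\<^sup>2) sequentially"
  proof (rule eventually_mono[OF eventually_ge_at_top[of 1]])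
    fix k :: nat assume "k \<ge> 1"
    then have kp: "real k > 0" by simp
    have "real k powr (-3/2) = real k powr (1/2 - 2)" by simp
    also have "\<dots> = real k powr (1/2) / real k powr 2" by (rule powr_diff)
    also have "\<dots> = sqrt (real k) / (real k)\<^sup>2" using kp by (simp add: powr_half_sqrt powr_numeral)
    finally show "real k powr (-3/2) = sqrt (real k) / (real k)\<^sup>2" .
  qed
  ultimately show ?thesis by (rule summable_cong[THEN iffD1, rotated])
qed

lemma summable_inv_sq: "summable (\<lambda>k. 1 / (real k)\<^sup>2)"
  using inverse_power_summable[of 2, where 'a=real] by (simp add: inverse_eq_divide)

context setting begin

lemma mm_sq: "k \<ge> 1 \<Longrightarrow> (mm k)\<^sup>2 \<le> \<sigma>\<^sup>2 / (real k)\<^sup>2"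
proof -
  assume k: "k \<ge> 1"
  have "(mm k)\<^sup>2 = \<bar>mm k\<bar>\<^sup>2" by simp
  also have "\<dots> \<le> (\<sigma> / real k)\<^sup>2" using mm_bound[OF k] by (intro power_mono) auto
  finally show ?thesis by (simp add: power_divide)
qed

lemma mm_pow: "k \<ge> 1 \<Longrightarrow> \<bar>mm k\<bar>^n \<le> \<sigma>^n / (real k)\<^sup>2" if "n \<ge> 2"
proof -
  assume k: "k \<ge> 1"
  have "\<bar>mm k\<bar>^n \<le> (\<sigma> / real k)^n" using mm_bound[OF k] by (intro power_mono) auto
  also have "\<dots> = \<sigma>^n / (real k)^n" by (simp add: power_divide)
  also have "\<dots> \<le> \<sigma>^n / (real k)\<^sup>2"
    using k that sig_nn by (intro divide_left_mono power_increasing mult_pos_pos) auto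
  finally show ?thesis .
qed

lemma St_mom2: "k \<ge> 1 \<Longrightarrow> expectation (\<lambda>\<omega>. (St k \<omega>)\<^sup>2) = vv k / real k + (mm k)\<^sup>2"
proof -
  assume k: "k \<ge> 1"
  have iT2: "integrable M (\<lambda>\<omega>. (T k \<omega>)\<^sup>2)" by (intro bnd_integrable bnd_on_power T_bnd) auto
  have iT: "integrable M (T k)" by (intro bnd_integrable T_bnd) auto
  have "expectation (\<lambda>\<omega>. (St k \<omega>)\<^sup>2) = expectation (\<lambda>\<omega>. (T k \<omega>)\<^sup>2 / (real k)\<^sup>2 + (2 * mm k / real k) * T k \<omega> + (mm k)\<^sup>2)"
    using k by (intro Bochner_Integration.integral_cong) (auto simp: St_eq power2_eq_square field_simps)
  also have "\<dots> = expectation (\<lambda>\<omega>. (T k \<omega>)\<^sup>2) / (real k)\<^sup>2 + (2 * mm k / real k) * expectation (T k) + (mm k)\<^sup>2"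
    using iT iT2 by (simp add: prob_space)
  also have "\<dots> = real k * vv k / (real k)\<^sup>2 + (mm k)\<^sup>2" by (simp add: T_mom2 T_mean)
  also have "\<dots> = vv k / real k + (mm k)\<^sup>2" using k by (simp add: power2_eq_square)
  finally show ?thesis .
qed

lemma dterm: "k \<ge> 1 \<Longrightarrow> \<bar>expectation (\<lambda>\<omega>. (St k \<omega>)\<^sup>2) - aa k / real k\<bar> \<le> \<sigma>\<^sup>2 / (real k)\<^sup>2"
proof -
  assume k: "k \<ge> 1"
  have "expectation (\<lambda>\<omega>. (St k \<omega>)\<^sup>2) - aa k / real k = (mm k)\<^sup>2 * (1 - 1 / real k)"
    using k by (simp add: St_mom2 vv_eq field_simps)
  also have "\<bar>\<dots>\<bar> \<le> (mm k)\<^sup>2"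
    using k by (auto simp: abs_mult intro!: mult_left_le)
  also have "\<dots> \<le> \<sigma>\<^sup>2 / (real k)\<^sup>2" by (rule mm_sq[OF k])
  finally show ?thesis .
qed

definition "bU k = 64 * (q4 k / (real k)^3) + 96 * \<sigma>^4 * (1 / (real k)\<^sup>2)"
definition "bC k = 12 * \<sigma>^3 * (sqrt (real k) / (real k)\<^sup>2) + 48 * (q3 k / (real k)\<^sup>2) + 52 * \<sigma>^3 * (1 / (real k)\<^sup>2)"

lemma bU_summable: "summable bU"
  unfolding bU_def by (intro summable_add summable_mult SC summable_inv_sq)

lemma bC_summable: "summable bC"
  unfolding bC_def by (intro summable_add summable_mult SB summable_inv_sq summable_sqrt_div)

lemma q3_nn: "q3 k \<ge> 0" unfolding q3_def by (rule integral_nonneg_AE) auto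
lemma q4_nn: "q4 k \<ge> 0" unfolding q4_def by (rule integral_nonneg_AE) (auto simp: zero_le_even_power)

lemma bU_nn: "bU k \<ge> 0" unfolding bU_def using q4_nn[of k] by (auto intro!: add_nonneg_nonneg)
lemma bC_nn: "bC k \<ge> 0" unfolding bC_def using q3_nn[of k] sig_nn by (auto intro!: add_nonneg_nonneg)

lemma St_mom4: "k \<ge> 1 \<Longrightarrow> expectation (\<lambda>\<omega>. (St k \<omega>)^4) \<le> bU k"
proof -
  assume k: "k \<ge> 1"
  have kp: "real k > 0" using k by simp
  have "expectation (\<lambda>\<omega>. (St k \<omega>)^4) \<le> expectation (\<lambda>\<omega>. 8 * ((T k \<omega>)^4 / (real k)^4 + (mm k)^4))"
  proof (rule integral_mono)
    show "integrable M (\<lambda>\<omega>. (St k \<omega>)^4)" by (intro bnd_integrable bnd_on_power St_bnd) auto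
    show "integrable M (\<lambda>\<omega>. 8 * ((T k \<omega>)^4 / (real k)^4 + (mm k)^4))"
      by (intro bnd_integrable bnd_on_mult bnd_on_add bnd_on_divide bnd_on_power T_bnd bnd_on_const) auto
    fix \<omega> show "(St k \<omega>)^4 \<le> 8 * ((T k \<omega>)^4 / (real k)^4 + (mm k)^4)"
      using pow4_convex[of "T k \<omega> / real k" "mm k"] k by (simp add: St_eq power_divide)
  qed
  also have "\<dots> = 8 * (expectation (\<lambda>\<omega>. (T k \<omega>)^4) / (real k)^4 + (mm k)^4)"
  proof -
    have "integrable M (\<lambda>\<omega>. (T k \<omega>)^4)" by (intro bnd_integrable bnd_on_power T_bnd) auto
    then show ?thesis by (simp add: prob_space)
  qed
  also have "\<dots> \<le> 8 * ((real k * (8 * (q4 k + (mm k)^4)) + 3 * (real k)\<^sup>2 * (\<sigma>\<^sup>2)\<^sup>2) / (real k)^4 + (mm k)^4)"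
    using T_mom4[of k] kp by (intro mult_left_mono add_mono divide_right_mono) auto
  also have "\<dots> = 64 * (q4 k / (real k)^3) + 64 * ((mm k)^4 / (real k)^3) + 24 * \<sigma>^4 / (real k)\<^sup>2 + 8 * (mm k)^4"
    using kp by (simp add: field_simps power2_eq_square power3_eq_cube power4_eq_xxxx)
  also have "\<dots> \<le> 64 * (q4 k / (real k)^3) + 64 * (\<sigma>^4 / (real k)\<^sup>2) + 24 * \<sigma>^4 / (real k)\<^sup>2 + 8 * (\<sigma>^4 / (real k)\<^sup>2)"
  proof -
    have m4: "(mm k)^4 \<le> \<sigma>^4 / (real k)\<^sup>2" using mm_pow[of 4 k] k by simp
    have "(mm k)^4 / (real k)^3 \<le> (mm k)^4 / 1" using k by (intro divide_left_mono) (auto simp: zero_le_even_power)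
    then show ?thesis using m4 by simp
  qed
  also have "\<dots> = bU k" by (simp add: bU_def)
  finally show ?thesis .
qed

lemma St_mom3: "k \<ge> 1 \<Longrightarrow> expectation (\<lambda>\<omega>. \<bar>St k \<omega>\<bar>^3) \<le> bC k"
proof -
  assume k: "k \<ge> 1"
  have kp: "real k > 0" using k by simp
  have "expectation (\<lambda>\<omega>. \<bar>St k \<omega>\<bar>^3) \<le> expectation (\<lambda>\<omega>. 4 * (\<bar>T k \<omega>\<bar>^3 / (real k)^3 + \<bar>mm k\<bar>^3))"
  proof (rule integral_mono)
    show "integrable M (\<lambda>\<omega>. \<bar>St k \<omega>\<bar>^3)" by (intro bnd_integrable bnd_on_power bnd_on_abs St_bnd) auto
    show "integrable M (\<lambda>\<omega>. 4 * (\<bar>T k \<omega>\<bar>^3 / (real k)^3 + \<bar>mm k\<bar>^3))"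
      by (intro bnd_integrable bnd_on_mult bnd_on_add bnd_on_divide bnd_on_power bnd_on_abs T_bnd bnd_on_const) auto
    fix \<omega> show "\<bar>St k \<omega>\<bar>^3 \<le> 4 * (\<bar>T k \<omega>\<bar>^3 / (real k)^3 + \<bar>mm k\<bar>^3)"
      using pow3_convex[of "T k \<omega> / real k" "mm k"] k kp by (simp add: St_eq power_divide)
  qed
  also have "\<dots> = 4 * (expectation (\<lambda>\<omega>. \<bar>T k \<omega>\<bar>^3) / (real k)^3 + \<bar>mm k\<bar>^3)"
  proof -
    have "integrable M (\<lambda>\<omega>. \<bar>T k \<omega>\<bar>^3)" by (intro bnd_integrable bnd_on_power bnd_on_abs T_bnd) auto
    then show ?thesis by (simp add: prob_space)
  qed
  also have "\<dots> \<le> 4 * ((3 * real k * sqrt (real k * \<sigma>\<^sup>2) * \<sigma>\<^sup>2 + 3 * real k * (4 * (q3 k + \<bar>mm k\<bar>^3))) / (real k)^3 + \<bar>mm k\<bar>^3)"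
    using T_mom3[of k] kp by (intro mult_left_mono add_mono divide_right_mono) auto
  also have "sqrt (real k * \<sigma>\<^sup>2) = sqrt (real k) * \<sigma>" using sig_nn by (simp add: real_sqrt_mult)
  also have "4 * ((3 * real k * (sqrt (real k) * \<sigma>) * \<sigma>\<^sup>2 + 3 * real k * (4 * (q3 k + \<bar>mm k\<bar>^3))) / (real k)^3 + \<bar>mm k\<bar>^3)
      = 12 * \<sigma>^3 * (sqrt (real k) / (real k)\<^sup>2) + 48 * (q3 k / (real k)\<^sup>2) + 48 * (\<bar>mm k\<bar>^3 / (real k)\<^sup>2) + 4 * \<bar>mm k\<bar>^3"
    using kp by (simp add: field_simps power2_eq_square power3_eq_cube)
  also have "\<dots> \<le> 12 * \<sigma>^3 * (sqrt (real k) / (real k)\<^sup>2) + 48 * (q3 k / (real k)\<^sup>2) + 48 * (\<sigma>^3 / (real k)\<^sup>2) + 4 * (\<sigma>^3 / (real k)\<^sup>2)"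
  proof -
    have m3: "\<bar>mm k\<bar>^3 \<le> \<sigma>^3 / (real k)\<^sup>2" using mm_pow[of 3 k] k by simp
    have "\<bar>mm k\<bar>^3 / (real k)\<^sup>2 \<le> \<bar>mm k\<bar>^3 / 1" using k by (intro divide_left_mono) auto
    then show ?thesis using m3 by simp
  qed
  also have "\<dots> = bC k" by (simp add: bC_def)
  finally show ?thesis .
qed

end


context setting begin

definition "U k \<omega> = (St k \<omega>)\<^sup>2 - expectation (\<lambda>\<omega>. (St k \<omega>)\<^sup>2)"

lemma R_disj: "disjoint_family_on R L"
  unfolding disjoint_family_on_def R_def by auto

lemma St_alt: "St k \<omega> = (\<Sum>p\<in>R k. tr \<sigma> k ((\<lambda>(i, k). Xa i k) p \<omega> - \<mu>)) / real k"
proof -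
  have "(\<Sum>p\<in>R k. tr \<sigma> k ((\<lambda>(i, k). Xa i k) p \<omega> - \<mu>)) = (\<Sum>i=1..k. tr \<sigma> k (Xa i k \<omega> - \<mu>))"
    unfolding R_def by (subst sum.reindex) (auto simp: inj_on_def)
  then show ?thesis by (simp add: St_def)
qed

lemma U_indep: "indep_vars (\<lambda>_. borel) U L"
proof -
  define XX where "XX = (\<lambda>(i::nat, k::nat). Xa i k)"
  have "indep_vars (\<lambda>k. PiM (R k) (\<lambda>_. borel)) (\<lambda>k \<omega>. restrict (\<lambda>p. XX p \<omega>) (R k)) L"
    unfolding XX_def by (rule indep_vars_restrict[OF ind R_sub R_disj])
  moreover define G where "G k x = ((\<Sum>p\<in>R k. tr \<sigma> k (x p - \<mu>)) / real k)\<^sup>2 - expectation (\<lambda>\<omega>. (St k \<omega>)\<^sup>2)" for k x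
  have Gm: "G k \<in> borel_measurable (PiM (R k) (\<lambda>_. borel))" for k
  proof -
    have "(\<lambda>x. \<Sum>p\<in>R k. tr \<sigma> k (x p - \<mu>)) \<in> borel_measurable (PiM (R k) (\<lambda>_. borel))"
    proof (rule borel_measurable_sum)
      fix p assume "p \<in> R k"
      then have "(\<lambda>x. x p) \<in> borel_measurable (PiM (R k) (\<lambda>_. borel))"
        by (rule measurable_component_singleton)
      then show "(\<lambda>x. tr \<sigma> k (x p - \<mu>)) \<in> borel_measurable (PiM (R k) (\<lambda>_. borel))" by measurable
    qed
    then show ?thesis unfolding G_def by measurable
  qed
  ultimately have "indep_vars (\<lambda>_. borel) (\<lambda>k \<omega>. G k (restrict (\<lambda>p. XX p \<omega>) (R k))) L"
    by (rule indep_vars_compose2)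
  moreover have "G k (restrict (\<lambda>p. XX p \<omega>) (R k)) = U k \<omega>" for k \<omega>
  proof -
    have "(\<Sum>p\<in>R k. tr \<sigma> k (restrict (\<lambda>p. XX p \<omega>) (R k) p - \<mu>)) = (\<Sum>p\<in>R k. tr \<sigma> k (XX p \<omega> - \<mu>))"
      by (intro sum.cong) auto
    then show ?thesis unfolding G_def U_def by (simp add: St_alt XX_def)
  qed
  ultimately show ?thesis by simp
qed

lemma U_bnd: "bnd_on (space M) (U k)"
  unfolding U_def by (intro bnd_on_diff bnd_on_power St_bnd bnd_on_const)

lemma U_mean: "expectation (U k) = 0"
proof -
  have "integrable M (\<lambda>\<omega>. (St k \<omega>)\<^sup>2)" by (intro bnd_integrable bnd_on_power St_bnd) auto
  then show ?thesis unfolding U_def by (simp add: prob_space)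
qed

lemma U_sq: "k \<ge> 1 \<Longrightarrow> expectation (\<lambda>\<omega>. (U k \<omega>)\<^sup>2) \<le> bU k"
proof -
  assume k: "k \<ge> 1"
  define c where "c = expectation (\<lambda>\<omega>. (St k \<omega>)\<^sup>2)"
  have i2: "integrable M (\<lambda>\<omega>. (St k \<omega>)\<^sup>2)" by (intro bnd_integrable bnd_on_power St_bnd) auto
  have i4: "integrable M (\<lambda>\<omega>. (St k \<omega>)^4)" by (intro bnd_integrable bnd_on_power St_bnd) auto
  have "expectation (\<lambda>\<omega>. (U k \<omega>)\<^sup>2) = expectation (\<lambda>\<omega>. (St k \<omega>)^4 - 2 * c * (St k \<omega>)\<^sup>2 + c\<^sup>2)"
    unfolding U_def c_def[symmetric]
    by (intro Bochner_Integration.integral_cong) (auto simp: power2_eq_square power4_eq_xxxx algebra_simps)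
  also have "\<dots> = expectation (\<lambda>\<omega>. (St k \<omega>)^4) - 2 * c * c + c\<^sup>2"
    using i2 i4 by (simp add: prob_space c_def)
  also have "\<dots> \<le> expectation (\<lambda>\<omega>. (St k \<omega>)^4)" by (simp add: power2_eq_square)
  also have "\<dots> \<le> bU k" by (rule St_mom4[OF k])
  finally show ?thesis .
qed

lemma abs_le_sq: "\<bar>x::real\<bar> \<le> x\<^sup>2 / 2 + 1 / 2"
proof -
  have "0 \<le> (\<bar>x\<bar> - 1)\<^sup>2" by simp
  then show ?thesis by (simp add: power2_eq_square algebra_simps)
qed

lemma part1_L1:
  "expectation (\<lambda>\<omega>. \<bar>\<Sum>k=1..n. ((St k \<omega>)\<^sup>2 - aa k / real k)\<bar>) \<le> suminf bU / 2 + 1 / 2 + \<sigma>\<^sup>2 * (\<Sum>k. 1 / (real k)\<^sup>2)"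
proof -
  define d where "d k = expectation (\<lambda>\<omega>. (St k \<omega>)\<^sup>2) - aa k / real k" for k
  define SU where "SU \<omega> = (\<Sum>k=1..n. U k \<omega>)" for \<omega>
  have SUb: "bnd_on (space M) SU" unfolding SU_def by (intro bnd_on_sum U_bnd)
  have SUm[measurable]: "SU \<in> borel_measurable M" unfolding SU_def U_def by measurable
  have eq: "(\<Sum>k=1..n. ((St k \<omega>)\<^sup>2 - aa k / real k)) = SU \<omega> + (\<Sum>k=1..n. d k)" for \<omega>
    by (simp add: SU_def U_def d_def sum.distrib[symmetric])
  have "expectation (\<lambda>\<omega>. \<bar>\<Sum>k=1..n. ((St k \<omega>)\<^sup>2 - aa k / real k)\<bar>) \<le> expectation (\<lambda>\<omega>. (SU \<omega>)\<^sup>2 / 2 + 1/2 + \<bar>\<Sum>k=1..n. d k\<bar>)"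
  proof (rule integral_mono)
    show "integrable M (\<lambda>\<omega>. \<bar>\<Sum>k=1..n. ((St k \<omega>)\<^sup>2 - aa k / real k)\<bar>)"
      unfolding eq by (intro bnd_integrable bnd_on_abs bnd_on_add SUb bnd_on_const) auto
    show "integrable M (\<lambda>\<omega>. (SU \<omega>)\<^sup>2 / 2 + 1/2 + \<bar>\<Sum>k=1..n. d k\<bar>)"
      by (intro bnd_integrable bnd_on_add bnd_on_divide bnd_on_power SUb bnd_on_const) auto
    fix \<omega> show "\<bar>\<Sum>k=1..n. ((St k \<omega>)\<^sup>2 - aa k / real k)\<bar> \<le> (SU \<omega>)\<^sup>2 / 2 + 1/2 + \<bar>\<Sum>k=1..n. d k\<bar>"
      unfolding eq using abs_le_sq[of "SU \<omega>"] abs_triangle_ineq[of "SU \<omega>" "\<Sum>k=1..n. d k"] by linarith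
  qed
  also have "\<dots> = expectation (\<lambda>\<omega>. (SU \<omega>)\<^sup>2) / 2 + 1/2 + \<bar>\<Sum>k=1..n. d k\<bar>"
  proof -
    have "integrable M (\<lambda>\<omega>. (SU \<omega>)\<^sup>2)" by (intro bnd_integrable bnd_on_power SUb) auto
    then show ?thesis by (simp add: prob_space)
  qed
  also have "expectation (\<lambda>\<omega>. (SU \<omega>)\<^sup>2) = (\<Sum>k=1..n. expectation (\<lambda>\<omega>. (U k \<omega>)\<^sup>2))"
    unfolding SU_def by (intro sum_moment2 U_indep U_bnd U_mean) auto
  also have "\<dots> \<le> (\<Sum>k=1..n. bU k)" by (intro sum_mono U_sq) auto
  also have "\<dots> \<le> suminf bU" by (intro sum_le_suminf bU_summable bU_nn) auto
  also have "\<bar>\<Sum>k=1..n. d k\<bar> \<le> (\<Sum>k=1..n. \<bar>d k\<bar>)" by (rule sum_abs)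
  also have "\<dots> \<le> (\<Sum>k=1..n. \<sigma>\<^sup>2 * (1 / (real k)\<^sup>2))" unfolding d_def by (intro sum_mono) (auto intro: dterm)
  also have "\<dots> = \<sigma>\<^sup>2 * (\<Sum>k=1..n. 1 / (real k)\<^sup>2)" by (simp add: sum_distrib_left)
  also have "\<dots> \<le> \<sigma>\<^sup>2 * (\<Sum>k. 1 / (real k)\<^sup>2)"
    by (intro mult_left_mono sum_le_suminf summable_inv_sq) auto
  finally show ?thesis by simp
qed

lemma part2_L1:
  "expectation (\<lambda>\<omega>. \<bar>\<Sum>k=1..n. \<bar>St k \<omega>\<bar>^3\<bar>) \<le> suminf bC"
proof -
  have i: "integrable M (\<lambda>\<omega>. \<bar>St k \<omega>\<bar>^3)" for k by (intro bnd_integrable bnd_on_power bnd_on_abs St_bnd) auto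
  have "expectation (\<lambda>\<omega>. \<bar>\<Sum>k=1..n. \<bar>St k \<omega>\<bar>^3\<bar>) = expectation (\<lambda>\<omega>. \<Sum>k=1..n. \<bar>St k \<omega>\<bar>^3)"
    by (rule Bochner_Integration.integral_cong) (auto intro!: abs_of_nonneg sum_nonneg)
  also have "\<dots> = (\<Sum>k=1..n. expectation (\<lambda>\<omega>. \<bar>St k \<omega>\<bar>^3))"
    by (rule Bochner_Integration.integral_sum) (rule i)
  also have "\<dots> \<le> (\<Sum>k=1..n. bC k)" by (intro sum_mono St_mom3) auto
  also have "\<dots> \<le> suminf bC" by (intro sum_le_suminf bC_summable bC_nn) auto
  finally show ?thesis .
qed

end


context setting begin

definition "Sb k \<omega> = ((\<Sum>i=1..k. Xa i k \<omega>) - real k * \<mu>) / real k"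

lemma Sb_m[measurable]: "Sb k \<in> borel_measurable M"
  unfolding Sb_def by measurable

lemma Sb_St: "(\<And>i. i \<in> {1..k} \<Longrightarrow> \<bar>Xa i k \<omega> - \<mu>\<bar> \<le> \<sigma> * real k) \<Longrightarrow> Sb k \<omega> = St k \<omega>"
proof -
  assume h: "\<And>i. i \<in> {1..k} \<Longrightarrow> \<bar>Xa i k \<omega> - \<mu>\<bar> \<le> \<sigma> * real k"
  have "(\<Sum>i=1..k. tr \<sigma> k (Xa i k \<omega> - \<mu>)) = (\<Sum>i=1..k. Xa i k \<omega> - \<mu>)"
    using h by (intro sum.cong) (auto simp: tr_def)
  also have "\<dots> = (\<Sum>i=1..k. Xa i k \<omega>) - real k * \<mu>" by (simp add: sum_subtractf)
  finally show ?thesis by (simp add: Sb_def St_def)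
qed

lemma rare:
  fixes F :: "nat \<Rightarrow> real \<Rightarrow> real"
  assumes Fm: "\<And>k. F k \<in> borel_measurable borel"
  shows "summable (\<lambda>k. prob {\<omega> \<in> space M. F k (Sb k \<omega>) - F k (St k \<omega>) \<noteq> 0})"
proof (rule summable_comparison_test[OF _ SA])
  show "\<exists>N. \<forall>k\<ge>N. norm (prob {\<omega> \<in> space M. F k (Sb k \<omega>) - F k (St k \<omega>) \<noteq> 0})
      \<le> real k * prob {\<omega> \<in> space M. \<sigma> * real k < \<bar>X \<omega> - \<mu>\<bar>}"
  proof (intro exI[of _ 0] allI impI)
    fix k :: nat
    define B where "B = {x. \<sigma> * real k < \<bar>x - \<mu>\<bar>}"
    have Bs: "B \<in> sets borel" unfolding B_def by measurable
    define A where "A i = {\<omega> \<in> space M. Xa i k \<omega> \<in> B}" for i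
    have As: "A i \<in> sets M" if "i \<in> {1..k}" for i
    proof -
      have "Xa i k \<in> borel_measurable M" using that by (intro Xa_m) auto
      from measurable_sets[OF this Bs] show ?thesis
        unfolding A_def by (simp add: vimage_def Int_def conj_commute)
    qed
    have sub: "{\<omega> \<in> space M. F k (Sb k \<omega>) - F k (St k \<omega>) \<noteq> 0} \<subseteq> (\<Union>i\<in>{1..k}. A i)"
    proof safe
      fix \<omega> assume \<omega>: "\<omega> \<in> space M" "F k (Sb k \<omega>) - F k (St k \<omega>) \<noteq> 0"
      show "\<omega> \<in> (\<Union>i\<in>{1..k}. A i)"
      proof (rule ccontr)
        assume "\<omega> \<notin> (\<Union>i\<in>{1..k}. A i)"
        then have "\<And>i. i \<in> {1..k} \<Longrightarrow> \<bar>Xa i k \<omega> - \<mu>\<bar> \<le> \<sigma> * real k"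
          using \<omega>(1) unfolding A_def B_def by (auto simp: not_less)
        then have "Sb k \<omega> = St k \<omega>" by (rule Sb_St)
        then show False using \<omega>(2) by simp
      qed
    qed
    have "norm (prob {\<omega> \<in> space M. F k (Sb k \<omega>) - F k (St k \<omega>) \<noteq> 0}) = prob {\<omega> \<in> space M. F k (Sb k \<omega>) - F k (St k \<omega>) \<noteq> 0}"
      by simp
    also have "\<dots> \<le> prob (\<Union>i\<in>{1..k}. A i)"
      using sub As by (intro finite_measure_mono) auto
    also have "\<dots> \<le> (\<Sum>i\<in>{1..k}. prob (A i))"
      using As by (intro measure_UNION_le) auto
    also have "\<dots> = (\<Sum>i\<in>{1..k}. prob {\<omega> \<in> space M. X \<omega> \<in> B})"
      unfolding A_def using Bs by (intro sum.cong refl transfer_prob) auto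
    also have "\<dots> = real k * prob {\<omega> \<in> space M. \<sigma> * real k < \<bar>X \<omega> - \<mu>\<bar>}"
      by (simp add: B_def)
    finally show "norm (prob {\<omega> \<in> space M. F k (Sb k \<omega>) - F k (St k \<omega>) \<noteq> 0})
      \<le> real k * prob {\<omega> \<in> space M. \<sigma> * real k < \<bar>X \<omega> - \<mu>\<bar>}" .
  qed
qed

lemma P1: "bounded_in_prob M (\<lambda>n \<omega>. \<Sum>k=1..n. (Sb k \<omega>)\<^sup>2 - aa k / real k)"
proof (rule bip_add[OF prob_space_axioms])
  show "bounded_in_prob M (\<lambda>n \<omega>. \<Sum>k=1..n. (Sb k \<omega>)\<^sup>2 - (St k \<omega>)\<^sup>2)"
    using rare[of "\<lambda>k x. x\<^sup>2"] by (intro bip_rare[OF prob_space_axioms]) auto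
  show "bounded_in_prob M (\<lambda>n \<omega>. \<Sum>k=1..n. (St k \<omega>)\<^sup>2 - aa k / real k)"
  proof (rule bip_L1[OF prob_space_axioms])
    show "integrable M (\<lambda>\<omega>. \<Sum>k=1..n. (St k \<omega>)\<^sup>2 - aa k / real k)" for n
      by (intro bnd_integrable bnd_on_sum bnd_on_diff bnd_on_power St_bnd bnd_on_const) auto
    show "expectation (\<lambda>\<omega>. \<bar>\<Sum>k=1..n. (St k \<omega>)\<^sup>2 - aa k / real k\<bar>) \<le> suminf bU / 2 + 1 / 2 + \<sigma>\<^sup>2 * (\<Sum>k. 1 / (real k)\<^sup>2)" for n
      by (rule part1_L1)
  qed
  show "\<And>n. (\<lambda>\<omega>. \<Sum>k=1..n. (Sb k \<omega>)\<^sup>2 - (St k \<omega>)\<^sup>2) \<in> borel_measurable M" by measurable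
  show "\<And>n. (\<lambda>\<omega>. \<Sum>k=1..n. (St k \<omega>)\<^sup>2 - aa k / real k) \<in> borel_measurable M" by measurable
  show "(\<Sum>k=1..n. (Sb k \<omega>)\<^sup>2 - aa k / real k) = (\<Sum>k=1..n. (Sb k \<omega>)\<^sup>2 - (St k \<omega>)\<^sup>2) + (\<Sum>k=1..n. (St k \<omega>)\<^sup>2 - aa k / real k)" for n \<omega>
    by (simp add: sum.distrib[symmetric])
qed

lemma P2: "bounded_in_prob M (\<lambda>n \<omega>. \<Sum>k=1..n. \<bar>Sb k \<omega>\<bar>^3)"
proof (rule bip_add[OF prob_space_axioms])
  show "bounded_in_prob M (\<lambda>n \<omega>. \<Sum>k=1..n. \<bar>Sb k \<omega>\<bar>^3 - \<bar>St k \<omega>\<bar>^3)"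
    using rare[of "\<lambda>k x. \<bar>x\<bar>^3"] by (intro bip_rare[OF prob_space_axioms]) auto
  show "bounded_in_prob M (\<lambda>n \<omega>. \<Sum>k=1..n. \<bar>St k \<omega>\<bar>^3)"
  proof (rule bip_L1[OF prob_space_axioms])
    show "integrable M (\<lambda>\<omega>. \<Sum>k=1..n. \<bar>St k \<omega>\<bar>^3)" for n
      by (intro bnd_integrable bnd_on_sum bnd_on_power bnd_on_abs St_bnd) auto
    show "expectation (\<lambda>\<omega>. \<bar>\<Sum>k=1..n. \<bar>St k \<omega>\<bar>^3\<bar>) \<le> suminf bC" for n
      by (rule part2_L1)
  qed
  show "\<And>n. (\<lambda>\<omega>. \<Sum>k=1..n. \<bar>Sb k \<omega>\<bar>^3 - \<bar>St k \<omega>\<bar>^3) \<in> borel_measurable M" by measurable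
  show "\<And>n. (\<lambda>\<omega>. \<Sum>k=1..n. \<bar>St k \<omega>\<bar>^3) \<in> borel_measurable M" by measurable
  show "(\<Sum>k=1..n. \<bar>Sb k \<omega>\<bar>^3) = (\<Sum>k=1..n. \<bar>Sb k \<omega>\<bar>^3 - \<bar>St k \<omega>\<bar>^3) + (\<Sum>k=1..n. \<bar>St k \<omega>\<bar>^3)" for n \<omega>
    by (simp add: sum.distrib[symmetric])
qed

lemma aa_alt: "integral\<^sup>L M (\<lambda>\<omega>'. (if \<bar>X \<omega>' - \<mu>\<bar> \<le> \<sigma> * real k then (X \<omega>' - \<mu>)\<^sup>2 else 0)) = aa k"
  unfolding aa_def tr_def by (intro Bochner_Integration.integral_cong) auto

end

theorem mainTheorem7:
  fixes M :: "'a measure" and X :: "'a \<Rightarrow> real" and Xa :: "nat \<Rightarrow> nat \<Rightarrow> 'a \<Rightarrow> real"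
    and \<mu> \<sigma> :: real
  assumes "prob_space M"
    and "X \<in> borel_measurable M"
    and "integrable M (\<lambda>\<omega>. (X \<omega>)\<^sup>2)"
    and "\<mu> = integral\<^sup>L M X"
    and "\<sigma> = sqrt (prob_space.variance M X)"
    and "prob_space.indep_vars M (\<lambda>_. borel) (\<lambda>(i, k). Xa i k) {(i, k). 1 \<le> i \<and> i \<le> k}"
    and "\<And>i k. 1 \<le> i \<Longrightarrow> i \<le> k \<Longrightarrow> distr M borel (Xa i k) = distr M borel X"
  shows "bounded_in_prob M (\<lambda>n \<omega>. \<Sum>k=1..n.
            (((\<Sum>i=1..k. Xa i k \<omega>) - real k * \<mu>) / real k)\<^sup>2
            - integral\<^sup>L M (\<lambda>\<omega>'. (if \<bar>X \<omega>' - \<mu>\<bar> \<le> \<sigma> * real k then (X \<omega>' - \<mu>)\<^sup>2 else 0)) / real k) \<and>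
         bounded_in_prob M (\<lambda>n \<omega>. \<Sum>k=1..n.
            \<bar>((\<Sum>i=1..k. Xa i k \<omega>) - real k * \<mu>) / real k\<bar> ^ 3)"
proof -
  have S: "setting M X Xa \<mu> \<sigma>"
    unfolding setting_def setting_axioms_def using assms by auto
  interpret setting M X Xa \<mu> \<sigma> by (rule S)
  have e1: "(\<lambda>n \<omega>. \<Sum>k=1..n.
            (((\<Sum>i=1..k. Xa i k \<omega>) - real k * \<mu>) / real k)\<^sup>2
            - integral\<^sup>L M (\<lambda>\<omega>'. (if \<bar>X \<omega>' - \<mu>\<bar> \<le> \<sigma> * real k then (X \<omega>' - \<mu>)\<^sup>2 else 0)) / real k)
      = (\<lambda>n \<omega>. \<Sum>k=1..n. (Sb k \<omega>)\<^sup>2 - aa k / real k)"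
    by (simp add: Sb_def aa_alt)
  have e2: "(\<lambda>n \<omega>. \<Sum>k=1..n. \<bar>((\<Sum>i=1..k. Xa i k \<omega>) - real k * \<mu>) / real k\<bar> ^ 3)
      = (\<lambda>n \<omega>. \<Sum>k=1..n. \<bar>Sb k \<omega>\<bar>^3)"
    by (simp add: Sb_def)
  show ?thesis unfolding e1 e2 using P1 P2 by simp
qed


end
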